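(* Let $n$ be even, let $M_0$ be a fixed perfect matching of $K_n$ and let $M_1$ be a uniformly random perfect matching of $K_n$. With probability $1-o(n^{-0.51})$: (a) the graph $M_0\cup M_1$ has at most $10\log_2 n$ connected components; (b) at most $n_b$ vertices lie in components of $M_0\cup M_1$ having at most $n_c$ vertices.
   Context: $M_0\cup M_1$ is the (multi)graph on $[n]$ with edge set $M_0\cup M_1$; its components are cycles alternating between $M_0$ and $M_1$ (a common edge counts as a component of size 2). $n_b=\frac{n\log\log\log n}{\log\log n}$ and $n_c=\frac{200n}{\log n}$, logarithms natural unless indicated. *)

theory Defs
  imports Complex_Main
begin

definition perfect_matchings :: "nat \<Rightarrow> nat set set set" where
  "perfect_matchings n =
     {M. (\<forall>e\<in>M. \<exists>u v. e = {u, v} \<and> u \<noteq> v \<and> u < n \<and> v < n)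
         \<and> (\<forall>v<n. \<exists>!e. e \<in> M \<and> v \<in> e)}"

definition components :: "nat \<Rightarrow> nat set set \<Rightarrow> nat set set" where
  "components n E = {..<n} // ({(u, v). {u, v} \<in> E}\<^sup>*)"

definition n_b :: "nat \<Rightarrow> real" where
  "n_b n = real n * ln (ln (ln (real n))) / ln (ln (real n))"

definition n_c :: "nat \<Rightarrow> real" where
  "n_c n = 200 * real n / ln (real n)"

definition good_event :: "nat \<Rightarrow> nat set set \<Rightarrow> nat set set \<Rightarrow> bool" where
  "good_event n M0 M1 \<longleftrightarrow>
     real (card (components n (M0 \<union> M1))) \<le> 10 * log 2 (real n)
     \<and> real (card (\<Union>{C \<in> components n (M0 \<union> M1). real (card C) \<le> n_c n})) \<le> n_b n"

definition fail_prob :: "nat \<Rightarrow> nat set set \<Rightarrow> real" where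
  "fail_prob n M0 =
     real (card {M1 \<in> perfect_matchings n. \<not> good_event n M0 M1})
     / real (card (perfect_matchings n))"

end

theory Submission
  imports Defs "HOL-Real_Asymp.Real_Asymp"
begin


definition pmV :: "'a set \<Rightarrow> 'a set set set" where
  "pmV V = {M. (\<forall>e\<in>M. \<exists>u v. e = {u, v} \<and> u \<noteq> v \<and> u \<in> V \<and> v \<in> V)
         \<and> (\<forall>v\<in>V. \<exists>!e. e \<in> M \<and> v \<in> e)}"

lemma pm_eq: "perfect_matchings n = pmV {..<n}"
  unfolding perfect_matchings_def pmV_def by auto

lemma pmV_edge: "M \<in> pmV V \<Longrightarrow> e \<in> M \<Longrightarrow> \<exists>u v. e = {u, v} \<and> u \<noteq> v \<and> u \<in> V \<and> v \<in> V"
  unfolding pmV_def by blast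

lemma pmV_sub: "M \<in> pmV V \<Longrightarrow> e \<in> M \<Longrightarrow> e \<subseteq> V"
  using pmV_edge by blast

lemma pmV_ex: "M \<in> pmV V \<Longrightarrow> v \<in> V \<Longrightarrow> \<exists>e\<in>M. v \<in> e"
  unfolding pmV_def by blast

lemma pmV_uniq: "M \<in> pmV V \<Longrightarrow> v \<in> e \<Longrightarrow> v \<in> e' \<Longrightarrow> e \<in> M \<Longrightarrow> e' \<in> M \<Longrightarrow> e = e'"
proof -
  assume a: "M \<in> pmV V" "v \<in> e" "v \<in> e'" "e \<in> M" "e' \<in> M"
  then have "v \<in> V" using pmV_sub by blast
  then show ?thesis using a unfolding pmV_def by blast
qed

lemma pmV_pow: "M \<in> pmV V \<Longrightarrow> M \<subseteq> Pow V"
  using pmV_sub by blast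

lemma pmV_finite: "finite V \<Longrightarrow> M \<in> pmV V \<Longrightarrow> finite M"
  using pmV_pow finite_Pow_iff finite_subset by metis

lemma pmV_set_finite: "finite V \<Longrightarrow> finite (pmV V)"
proof -
  assume "finite V"
  have "pmV V \<subseteq> Pow (Pow V)" using pmV_pow by blast
  then show ?thesis using \<open>finite V\<close> finite_subset by blast
qed

lemma pmV_doubleton: "M \<in> pmV V \<Longrightarrow> {x,y} \<in> M \<Longrightarrow> {x,z} \<in> M \<Longrightarrow> y = z"
proof -
  assume a: "M \<in> pmV V" "{x,y} \<in> M" "{x,z} \<in> M"
  then have "{x,y} = {x,z}" using pmV_uniq[OF a(1), of x] by auto
  then show "y = z" by (metis doubleton_eq_iff)
qed

lemma pmV_ne: "M \<in> pmV V \<Longrightarrow> {x,y} \<in> M \<Longrightarrow> x \<noteq> y"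
  using pmV_edge by (metis doubleton_eq_iff insert_absorb2)

lemma pmV_remove:
  assumes M: "M \<in> pmV V" and e: "{x,y} \<in> M"
  shows "M - {{x,y}} \<in> pmV (V - {x,y})"
  unfolding pmV_def
proof (intro CollectI conjI ballI)
  fix e' assume e': "e' \<in> M - {{x,y}}"
  then obtain u v where uv: "e' = {u,v}" "u \<noteq> v" "u \<in> V" "v \<in> V" using pmV_edge M by blast
  have "x \<notin> e'"
  proof
    assume "x \<in> e'" then have "e' = {x,y}" using pmV_uniq[OF M, of x e' "{x,y}"] e e' by simp
    then show False using e' by simp
  qed
  moreover have "y \<notin> e'"
  proof
    assume "y \<in> e'" then have "e' = {x,y}" using pmV_uniq[OF M, of y e' "{x,y}"] e e' by simp
    then show False using e' by simp
  qed
  ultimately show "\<exists>u v. e' = {u, v} \<and> u \<noteq> v \<and> u \<in> V - {x, y} \<and> v \<in> V - {x, y}"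
    using uv by auto
next
  fix w assume w: "w \<in> V - {x,y}"
  then obtain e' where e': "e' \<in> M" "w \<in> e'" using pmV_ex[OF M, of w] by auto
  then have "e' \<in> M - {{x, y}}" using w by auto
  moreover have "\<And>f. f \<in> M - {{x, y}} \<Longrightarrow> w \<in> f \<Longrightarrow> f = e'"
    using pmV_uniq[OF M, of w] e' by auto
  ultimately show "\<exists>!e. e \<in> M - {{x, y}} \<and> w \<in> e"
    using e' by blast
qed

lemma pmV_insert:
  assumes M: "M \<in> pmV W" and xy: "x \<notin> W" "y \<notin> W" "x \<noteq> y"
  shows "insert {x,y} M \<in> pmV (insert x (insert y W))"
  unfolding pmV_def
proof (intro CollectI conjI ballI)
  fix e assume e: "e \<in> insert {x,y} M"
  show "\<exists>u v. e = {u, v} \<and> u \<noteq> v \<and> u \<in> insert x (insert y W) \<and> v \<in> insert x (insert y W)"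
  proof (cases "e = {x,y}")
    case True then show ?thesis using xy by blast
  next
    case False then have "e \<in> M" using e by simp
    then obtain u v where "e = {u, v} \<and> u \<noteq> v \<and> u \<in> W \<and> v \<in> W" using pmV_edge[OF M] by blast
    then show ?thesis by blast
  qed
next
  have nxy: "\<And>e. e \<in> M \<Longrightarrow> x \<notin> e \<and> y \<notin> e" using pmV_sub[OF M] xy by blast
  fix w assume w: "w \<in> insert x (insert y W)"
  show "\<exists>!e. e \<in> insert {x, y} M \<and> w \<in> e"
  proof (cases "w \<in> W")
    case True
    then obtain e where e: "e \<in> M" "w \<in> e" using pmV_ex[OF M, of w] by auto
    have "\<And>f. f \<in> insert {x, y} M \<Longrightarrow> w \<in> f \<Longrightarrow> f = e"
      using pmV_uniq[OF M, of w] e True xy by auto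
    then show ?thesis using e by blast
  next
    case False
    then have "w = x \<or> w = y" using w by auto
    then have "\<And>f. f \<in> insert {x, y} M \<Longrightarrow> w \<in> f \<Longrightarrow> f = {x,y}"
      using nxy by auto
    then show ?thesis using \<open>w = x \<or> w = y\<close> by blast
  qed
qed

lemma pmV_empty: "pmV {} = {{}}"
  unfolding pmV_def by auto

fun pmc :: "nat \<Rightarrow> nat" where
  "pmc 0 = 1" | "pmc (Suc k) = (2*k+1) * pmc k"

lemma pmc_pos: "pmc k > 0" by (induction k) auto

lemma pmV_card: "finite V \<Longrightarrow> card V = 2*m \<Longrightarrow> card (pmV V) = pmc m"
proof (induction m arbitrary: V)
  case 0
  then have "V = {}" by auto
  then show ?case by (simp add: pmV_empty)
next
  case (Suc m)
  then obtain x where x: "x \<in> V" by fastforce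
  let ?f = "\<lambda>y. (insert {x,y}) ` pmV (V - {x,y})"
  have eq: "pmV V = (\<Union>y\<in>V-{x}. ?f y)"
  proof
    show "pmV V \<subseteq> (\<Union>y\<in>V-{x}. ?f y)"
    proof
      fix M assume M: "M \<in> pmV V"
      then obtain e where e: "e \<in> M" "x \<in> e" using pmV_ex[OF M x] by auto
      then obtain u v where uv: "e = {u,v}" "u \<noteq> v" "u \<in> V" "v \<in> V" using pmV_edge M by blast
      then obtain y where y: "e = {x,y}" "y \<in> V - {x}" using e by auto
      have "M = insert {x,y} (M - {{x,y}})" using e y by auto
      moreover have "M - {{x,y}} \<in> pmV (V - {x,y})" using pmV_remove M e y by metis
      ultimately show "M \<in> (\<Union>y\<in>V-{x}. ?f y)" using y by blast
    qed
  next
    show "(\<Union>y\<in>V-{x}. ?f y) \<subseteq> pmV V"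
    proof
      fix M' assume "M' \<in> (\<Union>y\<in>V-{x}. ?f y)"
      then obtain y M where y: "y \<in> V" "y \<noteq> x" and M: "M \<in> pmV (V - {x,y})" and M': "M' = insert {x,y} M"
        by blast
      have "insert {x,y} M \<in> pmV (insert x (insert y (V - {x,y})))"
        using pmV_insert[OF M] y by auto
      moreover have "insert x (insert y (V - {x,y})) = V" using x y by auto
      ultimately show "M' \<in> pmV V" using M' by simp
    qed
  qed
  have fin: "\<And>y. finite (?f y)" using pmV_set_finite Suc.prems(1) by blast
  have disj: "\<forall>y\<in>V-{x}. \<forall>y'\<in>V-{x}. y \<noteq> y' \<longrightarrow> ?f y \<inter> ?f y' = {}"
  proof (intro ballI impI)
    fix y y' assume yy: "y \<in> V-{x}" "y' \<in> V-{x}" "y \<noteq> y'"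
    show "?f y \<inter> ?f y' = {}"
    proof (rule ccontr)
      assume "?f y \<inter> ?f y' \<noteq> {}"
      then obtain N N' where N: "N \<in> pmV (V - {x,y})" "N' \<in> pmV (V - {x,y'})"
        "insert {x,y} N = insert {x,y'} N'" by blast
      have "insert {x,y} N \<in> (\<Union>y\<in>V-{x}. ?f y)" using N yy by blast
      then have "insert {x,y} N \<in> pmV V" using eq by simp
      moreover have "{x,y} \<in> insert {x,y} N" "{x,y'} \<in> insert {x,y} N" using N by auto
      ultimately show False using pmV_doubleton yy by metis
    qed
  qed
  have cardf: "\<And>y. y \<in> V - {x} \<Longrightarrow> card (?f y) = pmc m"
  proof -
    fix y assume y: "y \<in> V - {x}"
    have inj: "inj_on (insert {x,y}) (pmV (V - {x,y}))"
    proof (rule inj_onI)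
      fix N N' assume N: "N \<in> pmV (V - {x,y})" "N' \<in> pmV (V - {x,y})" "insert {x,y} N = insert {x,y} N'"
      have "{x,y} \<notin> N" using pmV_sub[OF N(1)] by blast
      moreover have "{x,y} \<notin> N'" using pmV_sub[OF N(2)] by blast
      ultimately show "N = N'" using N(3) by (metis insert_ident)
    qed
    have "card {x,y} = 2" using y by auto
    then have "card (V - {x,y}) = 2*m" using Suc.prems x y by (simp add: card_Diff_subset)
    then have "card (pmV (V - {x,y})) = pmc m" using Suc.IH Suc.prems(1) by simp
    then show "card (?f y) = pmc m" using card_image[OF inj] by simp
  qed
  have "card (pmV V) = (\<Sum>y\<in>V-{x}. card (?f y))"
    unfolding eq using card_UN_disjoint[OF _ _ disj] fin Suc.prems(1) by blast
  also have "\<dots> = (\<Sum>y\<in>V-{x}. pmc m)" using cardf by simp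
  also have "\<dots> = (2*m+1) * pmc m" using Suc.prems x by simp
  finally show ?case by simp
qed


definition rel :: "'a set set \<Rightarrow> ('a \<times> 'a) set" where "rel E = {(u,v). {u,v} \<in> E}"
definition comps :: "'a set \<Rightarrow> 'a set set \<Rightarrow> 'a set set" where "comps V E = V // (rel E)\<^sup>*"
definition restr :: "'a set set \<Rightarrow> 'a set \<Rightarrow> 'a set set" where "restr M S = {e\<in>M. e \<subseteq> S}"

lemma components_eq: "components n E = comps {..<n} E"
  by (simp add: components_def comps_def rel_def)

lemma rel_sym: "sym (rel E)"
  unfolding rel_def sym_def by (auto simp: insert_commute)

lemma rtr_sym: "(u,v) \<in> (rel E)\<^sup>* \<Longrightarrow> (v,u) \<in> (rel E)\<^sup>*"
  by (metis rel_sym sym_rtrancl symD)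

lemma closed_path:
  assumes "(u,v) \<in> R\<^sup>*" "u \<in> S" "\<forall>a b. (a,b) \<in> R \<longrightarrow> a \<in> S \<longrightarrow> b \<in> S"
  shows "v \<in> S \<and> (u,v) \<in> (R \<inter> S \<times> S)\<^sup>*"
  using assms(1)
proof (induction rule: rtrancl_induct)
  case base
  then show ?case using assms(2) by simp
next
  case (step y z)
  then have "z \<in> S" using assms(3) by blast
  moreover have "(y,z) \<in> R \<inter> S \<times> S" using step \<open>z \<in> S\<close> by blast
  ultimately show ?case using step rtrancl_into_rtrancl by metis
qed

lemma hom_path:
  assumes "(u,v) \<in> R\<^sup>*" "\<forall>a b. (a,b) \<in> R \<longrightarrow> (f a, f b) \<in> R'\<^sup>*"
  shows "(f u, f v) \<in> R'\<^sup>*"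
  using assms(1)
proof (induction rule: rtrancl_induct)
  case base then show ?case by simp
next
  case (step y z)
  then show ?case using assms(2) rtrancl_trans by metis
qed

context
  fixes V :: "'a set" and E :: "'a set set"
  assumes EV: "\<forall>e\<in>E. e \<subseteq> V"
begin

lemma relV: "(a,b) \<in> rel E \<Longrightarrow> a \<in> V \<and> b \<in> V"
  using EV unfolding rel_def by blast

lemma compE: "C \<in> comps V E \<Longrightarrow> \<exists>x\<in>V. C = (rel E)\<^sup>* `` {x}"
  unfolding comps_def quotient_def by blast

lemma comp_sub: "C \<in> comps V E \<Longrightarrow> C \<subseteq> V"
proof
  fix v assume C: "C \<in> comps V E" and v: "v \<in> C"
  obtain x where x: "x \<in> V" "C = (rel E)\<^sup>* `` {x}" using compE C by blast
  then have "(x,v) \<in> (rel E)\<^sup>*" using v by blast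
  moreover have "\<forall>a b. (a,b) \<in> rel E \<longrightarrow> a \<in> V \<longrightarrow> b \<in> V" using relV by simp
  ultimately show "v \<in> V" using closed_path[of x v "rel E" V] x by simp
qed

lemma comp_closed: "C \<in> comps V E \<Longrightarrow> u \<in> C \<Longrightarrow> (u,w) \<in> rel E \<Longrightarrow> w \<in> C"
proof -
  assume C: "C \<in> comps V E" and u: "u \<in> C" and uw: "(u,w) \<in> rel E"
  obtain x where x: "x \<in> V" "C = (rel E)\<^sup>* `` {x}" using compE C by blast
  then have "(x,u) \<in> (rel E)\<^sup>*" using u by blast
  then have "(x,w) \<in> (rel E)\<^sup>*" using uw by (rule rtrancl_into_rtrancl)
  then show "w \<in> C" using x by blast
qed

lemma comp_conn: "C \<in> comps V E \<Longrightarrow> u \<in> C \<Longrightarrow> w \<in> C \<Longrightarrow> (u,w) \<in> (rel E)\<^sup>*"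
proof -
  assume C: "C \<in> comps V E" and u: "u \<in> C" and w: "w \<in> C"
  obtain x where x: "x \<in> V" "C = (rel E)\<^sup>* `` {x}" using compE C by blast
  then have "(x,u) \<in> (rel E)\<^sup>*" "(x,w) \<in> (rel E)\<^sup>*" using u w by blast+
  then show ?thesis using rtr_sym rtrancl_trans by metis
qed

lemma comp_iff: "C \<in> comps V E \<Longrightarrow> u \<in> V \<Longrightarrow> (u \<in> C \<longleftrightarrow> (rel E)\<^sup>* `` {u} = C)"
proof -
  assume C: "C \<in> comps V E" and u: "u \<in> V"
  obtain x where x: "x \<in> V" "C = (rel E)\<^sup>* `` {x}" using compE C by blast
  show ?thesis
  proof
    assume "u \<in> C"
    then have xu: "(x,u) \<in> (rel E)\<^sup>*" using x by blast
    show "(rel E)\<^sup>* `` {u} = C"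
    proof
      show "(rel E)\<^sup>* `` {u} \<subseteq> C"
      proof
        fix w assume "w \<in> (rel E)\<^sup>* `` {u}"
        then have "(u,w) \<in> (rel E)\<^sup>*" by blast
        then have "(x,w) \<in> (rel E)\<^sup>*" using xu by (metis rtrancl_trans)
        then show "w \<in> C" using x by blast
      qed
      show "C \<subseteq> (rel E)\<^sup>* `` {u}"
      proof
        fix w assume "w \<in> C"
        then have "(x,w) \<in> (rel E)\<^sup>*" using x by blast
        then have "(u,w) \<in> (rel E)\<^sup>*" using rtr_sym[OF xu] by (metis rtrancl_trans)
        then show "w \<in> (rel E)\<^sup>* `` {u}" by blast
      qed
    qed
  next
    assume "(rel E)\<^sup>* `` {u} = C"
    then show "u \<in> C" by blast
  qed
qed

lemma comp_ne: "C \<in> comps V E \<Longrightarrow> C \<noteq> {}"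
  using compE by blast

lemma comp_disj: "C \<in> comps V E \<Longrightarrow> D \<in> comps V E \<Longrightarrow> C \<noteq> D \<Longrightarrow> C \<inter> D = {}"
proof (rule ccontr)
  assume C: "C \<in> comps V E" and D: "D \<in> comps V E" and ne: "C \<noteq> D" and "C \<inter> D \<noteq> {}"
  then obtain u where u: "u \<in> C" "u \<in> D" by blast
  then have "u \<in> V" using comp_sub[OF C] by auto
  then have "(rel E)\<^sup>* `` {u} = C" "(rel E)\<^sup>* `` {u} = D" using comp_iff[OF C] comp_iff[OF D] u by auto
  then show False using ne by simp
qed

lemma comps_finite: "finite V \<Longrightarrow> finite (comps V E)"
proof -
  assume "finite V"
  have "comps V E \<subseteq> Pow V" using comp_sub by auto
  then show ?thesis using \<open>finite V\<close> finite_subset by blast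
qed

lemma comp_edge: "C \<in> comps V E \<Longrightarrow> e \<in> E \<Longrightarrow> (\<forall>u v. e = {u,v}) \<or> True"
  by simp

lemma comps_card_sum: "finite V \<Longrightarrow> F \<subseteq> comps V E \<Longrightarrow> (\<Sum>C\<in>F. card C) = card (\<Union>F)"
proof -
  assume fin: "finite V" and F: "F \<subseteq> comps V E"
  have "finite F" using comps_finite[OF fin] F finite_subset by blast
  moreover have "\<forall>C\<in>F. finite C" using F comp_sub fin finite_subset by (metis subsetD)
  moreover have "\<forall>C\<in>F. \<forall>D\<in>F. C \<noteq> D \<longrightarrow> C \<inter> D = {}" using F comp_disj by (metis subsetD)
  ultimately have "pairwise disjnt F" "\<And>A. A \<in> F \<Longrightarrow> finite A"
    unfolding pairwise_def disjnt_def by auto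
  then show ?thesis using card_Union_disjoint[of F] by simp
qed

end


definition cycS :: "'a set set \<Rightarrow> 'a set \<Rightarrow> 'a set set set" where
  "cycS M0 C = {M \<in> pmV C. \<forall>u\<in>C. \<forall>v\<in>C. (u,v) \<in> (rel (M0 \<union> M))\<^sup>*}"

lemma pmV_restr:
  assumes M: "M \<in> pmV V" and S: "S \<subseteq> V" and cl: "\<forall>e\<in>M. e \<subseteq> S \<or> e \<subseteq> V - S"
  shows "restr M S \<in> pmV S"
  unfolding pmV_def
proof (intro CollectI conjI ballI)
  fix e assume e: "e \<in> restr M S"
  then have e1: "e \<in> M" "e \<subseteq> S" unfolding restr_def by auto
  then obtain u v where "e = {u,v}" "u \<noteq> v" using pmV_edge[OF M e1(1)] by auto
  then show "\<exists>u v. e = {u, v} \<and> u \<noteq> v \<and> u \<in> S \<and> v \<in> S" using e1(2) by auto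
next
  fix w assume w: "w \<in> S"
  then obtain e where e: "e \<in> M" "w \<in> e" using pmV_ex[OF M, of w] S by auto
  then have "\<not> e \<subseteq> V - S" using w by auto
  then have "e \<subseteq> S" using cl e(1) by auto
  hence "e \<in> restr M S" using e unfolding restr_def by simp
  moreover have "\<And>f. f \<in> restr M S \<Longrightarrow> w \<in> f \<Longrightarrow> f = e"
    using pmV_uniq[OF M, of w _ e] e unfolding restr_def by auto
  ultimately show "\<exists>!e. e \<in> restr M S \<and> w \<in> e" using e(2) by auto
qed

locale dec =
  fixes V :: "'a set" and M0 M1 :: "'a set set" and C :: "'a set"
  assumes finV: "finite V" and M0: "M0 \<in> pmV V" and M1: "M1 \<in> pmV V"
    and C: "C \<in> comps V (M0 \<union> M1)"
begin

lemma EV: "\<forall>e\<in>M0 \<union> M1. e \<subseteq> V"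
  using pmV_sub[OF M0] pmV_sub[OF M1] by auto

lemma CV: "C \<subseteq> V" using comp_sub[OF EV C] .

lemma Cne: "C \<noteq> {}" using comp_ne[OF EV C] .

lemma edge_cl: "e \<in> M0 \<union> M1 \<Longrightarrow> e \<subseteq> C \<or> e \<subseteq> V - C"
proof -
  assume e: "e \<in> M0 \<union> M1"
  then obtain u v where uv: "e = {u,v}"
    using pmV_edge[OF M0, of e] pmV_edge[OF M1, of e] by auto
  have eV: "e \<subseteq> V" using EV e by auto
  have r1: "(u,v) \<in> rel (M0 \<union> M1)" using e uv unfolding rel_def by simp
  have r2: "(v,u) \<in> rel (M0 \<union> M1)" using e uv unfolding rel_def by (simp add: insert_commute)
  show ?thesis
  proof (cases "u \<in> C")
    case True
    then have "v \<in> C" using comp_closed[OF EV C True r1] by simp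
    then show ?thesis using True uv by auto
  next
    case False
    then have "v \<notin> C" using comp_closed[OF EV C _ r2] by auto
    then show ?thesis using False uv eV by auto
  qed
qed

lemma edge_cl0: "\<forall>e\<in>M0. e \<subseteq> C \<or> e \<subseteq> V - C" using edge_cl by auto
lemma edge_cl1: "\<forall>e\<in>M1. e \<subseteq> C \<or> e \<subseteq> V - C" using edge_cl by auto

lemma edge_cl0': "\<forall>e\<in>M0. e \<subseteq> V - C \<or> e \<subseteq> V - (V - C)"
  using edge_cl0 CV by (auto simp: Diff_Diff_Int inf.absorb2)
lemma edge_cl1': "\<forall>e\<in>M1. e \<subseteq> V - C \<or> e \<subseteq> V - (V - C)"
  using edge_cl1 CV by (auto simp: Diff_Diff_Int inf.absorb2)

lemma pm0C: "restr M0 C \<in> pmV C" using pmV_restr[OF M0 CV edge_cl0] .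
lemma pm1C: "restr M1 C \<in> pmV C" using pmV_restr[OF M1 CV edge_cl1] .
lemma pm0R: "restr M0 (V - C) \<in> pmV (V - C)" using pmV_restr[OF M0 _ edge_cl0'] by auto
lemma pm1R: "restr M1 (V - C) \<in> pmV (V - C)" using pmV_restr[OF M1 _ edge_cl1'] by auto

lemma M1_split: "M1 = restr M1 C \<union> restr M1 (V - C)"
  using edge_cl1 unfolding restr_def by auto

lemma cyc: "restr M1 C \<in> cycS (restr M0 C) C"
  unfolding cycS_def
proof (intro CollectI conjI pm1C ballI)
  fix u v assume u: "u \<in> C" and v: "v \<in> C"
  have p: "(u,v) \<in> (rel (M0 \<union> M1))\<^sup>*" using comp_conn[OF EV C u v] .
  have cl: "\<forall>a b. (a,b) \<in> rel (M0 \<union> M1) \<longrightarrow> a \<in> C \<longrightarrow> b \<in> C"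
    using comp_closed[OF EV C] by blast
  have "(u,v) \<in> (rel (M0 \<union> M1) \<inter> C \<times> C)\<^sup>*" using closed_path[OF p u cl] by simp
  moreover have "rel (M0 \<union> M1) \<inter> C \<times> C \<subseteq> rel (restr M0 C \<union> restr M1 C)"
    unfolding rel_def restr_def by auto
  ultimately show "(u,v) \<in> (rel (restr M0 C \<union> restr M1 C))\<^sup>*" using rtrancl_mono by blast
qed

lemma rest_comps: "comps (V - C) (restr M0 (V - C) \<union> restr M1 (V - C)) = comps V (M0 \<union> M1) - {C}"
proof -
  let ?R = "rel (M0 \<union> M1)" and ?R' = "rel (restr M0 (V - C) \<union> restr M1 (V - C))"
  have sub: "?R' \<subseteq> ?R" unfolding rel_def restr_def by auto
  have clS: "\<forall>a b. (a,b) \<in> ?R \<longrightarrow> a \<in> V - C \<longrightarrow> b \<in> V - C"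
  proof (intro allI impI)
    fix a b assume ab: "(a,b) \<in> ?R" and a: "a \<in> V - C"
    have "b \<in> V" using relV[OF EV ab] by simp
    moreover have "(b,a) \<in> ?R" using ab unfolding rel_def by (simp add: insert_commute)
    then have "b \<notin> C" using comp_closed[OF EV C, of b a] a by auto
    ultimately show "b \<in> V - C" by simp
  qed
  have sub2: "?R \<inter> (V - C) \<times> (V - C) \<subseteq> ?R'" unfolding rel_def restr_def by auto
  have img: "\<And>u. u \<in> V - C \<Longrightarrow> ?R'\<^sup>* `` {u} = ?R\<^sup>* `` {u}"
  proof
    fix u assume u: "u \<in> V - C"
    show "?R'\<^sup>* `` {u} \<subseteq> ?R\<^sup>* `` {u}" using rtrancl_mono[OF sub] by blast
    show "?R\<^sup>* `` {u} \<subseteq> ?R'\<^sup>* `` {u}"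
    proof
      fix v assume "v \<in> ?R\<^sup>* `` {u}"
      then have p: "(u,v) \<in> ?R\<^sup>*" by simp
      have "(u,v) \<in> (?R \<inter> (V - C) \<times> (V - C))\<^sup>*" using closed_path[OF p u clS] by simp
      then have "(u,v) \<in> ?R'\<^sup>*" using rtrancl_mono[OF sub2] by blast
      then show "v \<in> ?R'\<^sup>* `` {u}" by simp
    qed
  qed
  have "comps (V - C) (restr M0 (V - C) \<union> restr M1 (V - C)) = (\<lambda>u. ?R'\<^sup>* `` {u}) ` (V - C)"
    unfolding comps_def quotient_def by auto
  also have "\<dots> = (\<lambda>u. ?R\<^sup>* `` {u}) ` (V - C)" using img by auto
  also have "\<dots> = comps V (M0 \<union> M1) - {C}"
  proof
    show "(\<lambda>u. ?R\<^sup>* `` {u}) ` (V - C) \<subseteq> comps V (M0 \<union> M1) - {C}"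
    proof
      fix D assume "D \<in> (\<lambda>u. ?R\<^sup>* `` {u}) ` (V - C)"
      then obtain u where u: "u \<in> V - C" "D = ?R\<^sup>* `` {u}" by auto
      have "D \<in> comps V (M0 \<union> M1)" unfolding comps_def quotient_def using u by auto
      moreover have "D \<noteq> C" using comp_iff[OF EV C, of u] u by auto
      ultimately show "D \<in> comps V (M0 \<union> M1) - {C}" by simp
    qed
    show "comps V (M0 \<union> M1) - {C} \<subseteq> (\<lambda>u. ?R\<^sup>* `` {u}) ` (V - C)"
    proof
      fix D assume D: "D \<in> comps V (M0 \<union> M1) - {C}"
      then obtain u where u: "u \<in> V" "D = ?R\<^sup>* `` {u}" using compE[OF EV, of D] by auto
      have "u \<notin> C" using comp_iff[OF EV C u(1)] u D by auto
      then show "D \<in> (\<lambda>u. ?R\<^sup>* `` {u}) ` (V - C)" using u by auto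
    qed
  qed
  finally show ?thesis .
qed

end


definition partner :: "'a set set \<Rightarrow> 'a \<Rightarrow> 'a" where "partner M v = (THE w. {v,w} \<in> M)"

lemma partner_eq: "M \<in> pmV V \<Longrightarrow> {v,w} \<in> M \<Longrightarrow> partner M v = w"
  unfolding partner_def using pmV_doubleton by (metis the_equality)

lemma partner: "M \<in> pmV V \<Longrightarrow> v \<in> V \<Longrightarrow> {v, partner M v} \<in> M"
proof -
  assume M: "M \<in> pmV V" and v: "v \<in> V"
  obtain e where e: "e \<in> M" "v \<in> e" using pmV_ex[OF M v] by auto
  obtain a b where ab: "e = {a,b}" using pmV_edge[OF M e(1)] by auto
  have "\<exists>w. e = {v,w}" using e(2) ab by auto
  then obtain w where "e = {v,w}" by auto
  then show ?thesis using partner_eq[OF M] e(1) by simp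
qed

lemma partner_in: "M \<in> pmV V \<Longrightarrow> v \<in> V \<Longrightarrow> partner M v \<in> V \<and> partner M v \<noteq> v"
proof -
  assume M: "M \<in> pmV V" and v: "v \<in> V"
  have p: "{v, partner M v} \<in> M" using partner[OF M v] .
  then have "{v, partner M v} \<subseteq> V" using pmV_sub[OF M] by auto
  moreover have "partner M v \<noteq> v" using pmV_ne[OF M p] by auto
  ultimately show ?thesis by auto
qed

fun cycb :: "nat \<Rightarrow> nat" where
  "cycb 0 = 1" | "cycb (Suc 0) = 1" | "cycb (Suc (Suc b)) = 2*(Suc b)*cycb (Suc b)"

lemma cycS_sub: "cycS M0 C \<subseteq> pmV C" unfolding cycS_def by auto

lemma cyc_step:
  assumes finC: "finite C" and M0: "M0 \<in> pmV C" and x: "x \<in> C" and big: "card C > 2"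
  defines "x' \<equiv> partner M0 x"
  defines "C' \<equiv> C - {x, x'}"
  defines "M0' \<equiv> M0 - {{x, x'}}"
  defines "\<phi> \<equiv> \<lambda>M. (insert {partner M x', partner M x} (M - {{x', partner M x'}, {x, partner M x}}), partner M x')"
  shows "\<phi> ` cycS M0 C \<subseteq> cycS M0' C' \<times> C'" and "inj_on \<phi> (cycS M0 C)"
proof -
  have e0: "{x,x'} \<in> M0" using partner[OF M0 x] unfolding x'_def .
  have x'C: "x' \<in> C" "x' \<noteq> x" using partner_in[OF M0 x] unfolding x'_def by auto
  have M0': "M0' \<in> pmV C'" unfolding M0'_def C'_def using pmV_remove[OF M0 e0] .
  {
    fix M assume M: "M \<in> cycS M0 C"
    have Mp: "M \<in> pmV C" using M unfolding cycS_def by auto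
    have conn: "\<forall>u\<in>C. \<forall>v\<in>C. (u,v) \<in> (rel (M0 \<union> M))\<^sup>*" using M unfolding cycS_def by auto
    define y where "y = partner M x'"
    define z where "z = partner M x"
    have ey: "{x',y} \<in> M" unfolding y_def using partner[OF Mp x'C(1)] .
    have ez: "{x,z} \<in> M" unfolding z_def using partner[OF Mp x] .
    have yC: "y \<in> C" "y \<noteq> x'" unfolding y_def using partner_in[OF Mp x'C(1)] by auto
    have zC: "z \<in> C" "z \<noteq> x" unfolding z_def using partner_in[OF Mp x] by auto
    have yx: "y \<noteq> x"
    proof
      assume yx: "y = x"
      then have "{x,x'} \<in> M" using ey by (simp add: insert_commute)
      then have zx': "z = x'" using pmV_doubleton[OF Mp _ ez] by auto
      let ?S = "{x,x'}"
      have cl: "\<forall>a b. (a,b) \<in> rel (M0 \<union> M) \<longrightarrow> a \<in> ?S \<longrightarrow> b \<in> ?S"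
      proof (intro allI impI)
        fix a b assume ab: "(a,b) \<in> rel (M0 \<union> M)" and a: "a \<in> ?S"
        then have ab': "{a,b} \<in> M0 \<or> {a,b} \<in> M" unfolding rel_def by auto
        show "b \<in> ?S"
        proof (cases "a = x")
          case True
          then show ?thesis using ab' pmV_doubleton[OF M0 _ e0, of b] pmV_doubleton[OF Mp _ ez, of b] zx' by auto
        next
          case False
          then have ax: "a = x'" using a by auto
          have e0': "{x',x} \<in> M0" using e0 by (simp add: insert_commute)
          show ?thesis using ab' ax pmV_doubleton[OF M0 _ e0', of b] pmV_doubleton[OF Mp _ ey, of b] yx by auto
        qed
      qed
      have "C \<subseteq> ?S"
      proof
        fix v assume "v \<in> C"
        then have "(x,v) \<in> (rel (M0 \<union> M))\<^sup>*" using conn x by auto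
        then show "v \<in> ?S" using closed_path[of x v _ ?S] cl by auto
      qed
      then have "card C \<le> card ?S" using card_mono[of ?S C] by simp
      also have "\<dots> \<le> 2" by (simp add: card_insert_le_m1)
      finally show False using big by simp
    qed
    have zx': "z \<noteq> x'"
    proof
      assume "z = x'"
      then have "{x',x} \<in> M" using ez by (simp add: insert_commute)
      then have "y = x" using pmV_doubleton[OF Mp ey] by auto
      then show False using yx by simp
    qed
    have yz: "y \<noteq> z"
    proof
      assume "y = z"
      then have "{y,x'} \<in> M" "{y,x} \<in> M" using ey ez by (auto simp: insert_commute)
      then have "x' = x" using pmV_doubleton[OF Mp] by blast
      then show False using x'C by simp
    qed
    define M'' where "M'' = M - {{x',y},{x,z}}"
    have Mr1: "M - {{x',y}} \<in> pmV (C - {x',y})" using pmV_remove[OF Mp ey] .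
    have ez1: "{x,z} \<in> M - {{x',y}}" using ez yx x'C(2) by (auto simp: doubleton_eq_iff)
    have Mr2: "M - {{x',y}} - {{x,z}} \<in> pmV (C - {x',y} - {x,z})" using pmV_remove[OF Mr1 ez1] .
    have M''eq: "M'' = M - {{x',y}} - {{x,z}}" unfolding M''_def by auto
    have Mr3: "insert {y,z} M'' \<in> pmV (insert y (insert z (C - {x',y} - {x,z})))"
      using pmV_insert[OF Mr2[folded M''eq], of y z] yz by auto
    have Ceq: "insert y (insert z (C - {x',y} - {x,z})) = C'"
      unfolding C'_def using yC zC yx zx' yz by auto
    have M'pm: "insert {y,z} M'' \<in> pmV C'" using Mr3 Ceq by simp
    define \<pi> where "\<pi> = (\<lambda>v. if v = x \<or> v = x' then y else v)"
    have hom: "\<forall>a b. (a,b) \<in> rel (M0 \<union> M) \<longrightarrow> (\<pi> a, \<pi> b) \<in> (rel (M0' \<union> insert {y,z} M''))\<^sup>*"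
    proof (intro allI impI)
      fix a b assume "(a,b) \<in> rel (M0 \<union> M)"
      then have ab: "{a,b} \<in> M0 \<or> {a,b} \<in> M" unfolding rel_def by auto
      let ?R' = "rel (M0' \<union> insert {y,z} M'')"
      have yzR: "(y,z) \<in> ?R'" "(z,y) \<in> ?R'" unfolding rel_def by (auto simp: insert_commute)
      show "(\<pi> a, \<pi> b) \<in> ?R'\<^sup>*"
      proof (cases "{a,b} \<in> M0")
        case True
        show ?thesis
        proof (cases "{a,b} = {x,x'}")
          case True then show ?thesis unfolding \<pi>_def by (auto simp: doubleton_eq_iff)
        next
          case False
          then have in0: "{a,b} \<in> M0'" using \<open>{a,b} \<in> M0\<close> unfolding M0'_def by auto
          then have "{a,b} \<subseteq> C'" using pmV_sub[OF M0'] by auto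
          then have "\<pi> a = a" "\<pi> b = b" unfolding \<pi>_def C'_def by auto
          then show ?thesis using in0 unfolding rel_def by auto
        qed
      next
        case False
        then have inM: "{a,b} \<in> M" using ab by auto
        show ?thesis
        proof (cases "{a,b} = {x',y}")
          case True then show ?thesis unfolding \<pi>_def using yx yC by (auto simp: doubleton_eq_iff)
        next
          case nxy: False
          show ?thesis
          proof (cases "{a,b} = {x,z}")
            case True
            then have "(a = x \<and> b = z) \<or> (a = z \<and> b = x)" by (auto simp: doubleton_eq_iff)
            then show ?thesis unfolding \<pi>_def using zx' zC yzR by auto
          next
            case False
            then have in'': "{a,b} \<in> M''" using inM nxy unfolding M''_def by auto
            have ax: "a \<noteq> x \<and> b \<noteq> x"
            proof (rule ccontr)
              assume "\<not> (a \<noteq> x \<and> b \<noteq> x)"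
              then have "{x, (if a = x then b else a)} \<in> M" using inM by (auto simp: insert_commute)
              then have "(if a = x then b else a) = z" using pmV_doubleton[OF Mp _ ez] by blast
              then show False using False \<open>\<not> (a \<noteq> x \<and> b \<noteq> x)\<close> by (auto split: if_splits simp: insert_commute)
            qed
            have ax': "a \<noteq> x' \<and> b \<noteq> x'"
            proof (rule ccontr)
              assume "\<not> (a \<noteq> x' \<and> b \<noteq> x')"
              then have "{x', (if a = x' then b else a)} \<in> M" using inM by (auto simp: insert_commute)
              then have "(if a = x' then b else a) = y" using pmV_doubleton[OF Mp _ ey] by blast
              then show False using nxy \<open>\<not> (a \<noteq> x' \<and> b \<noteq> x')\<close> by (auto split: if_splits simp: insert_commute)
            qed
            then have "\<pi> a = a" "\<pi> b = b" using ax unfolding \<pi>_def by auto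
            then show ?thesis using in'' unfolding rel_def by auto
          qed
        qed
      qed
    qed
    have conn': "\<forall>u\<in>C'. \<forall>v\<in>C'. (u,v) \<in> (rel (M0' \<union> insert {y,z} M''))\<^sup>*"
    proof (intro ballI)
      fix u v assume u: "u \<in> C'" and v: "v \<in> C'"
      then have "(u,v) \<in> (rel (M0 \<union> M))\<^sup>*" using conn unfolding C'_def by auto
      then have "(\<pi> u, \<pi> v) \<in> (rel (M0' \<union> insert {y,z} M''))\<^sup>*" using hom_path[OF _ hom] by auto
      moreover have "\<pi> u = u" "\<pi> v = v" using u v unfolding \<pi>_def C'_def by auto
      ultimately show "(u,v) \<in> (rel (M0' \<union> insert {y,z} M''))\<^sup>*" by simp
    qed
    have phiM: "\<phi> M = (insert {y,z} M'', y)" unfolding \<phi>_def y_def z_def M''_def by simp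
    have yC': "y \<in> C'" using Ceq by auto
    have mem: "\<phi> M \<in> cycS M0' C' \<times> C'"
      using phiM M'pm conn' yC' unfolding cycS_def by auto
    have yzM'': "{y,z} \<notin> M''"
    proof
      assume "{y,z} \<in> M''"
      then have "{y,z} \<in> M" unfolding M''_def by auto
      moreover have "{y,x'} \<in> M" using ey by (simp add: insert_commute)
      ultimately show False using pmV_doubleton[OF Mp] zx' by blast
    qed
    have pz: "partner (insert {y,z} M'') y = z" using partner_eq[OF M'pm] by simp
    have rec: "insert {x',y} (insert {x, partner (fst (\<phi> M)) (snd (\<phi> M))} (fst (\<phi> M) - {{snd (\<phi> M), partner (fst (\<phi> M)) (snd (\<phi> M))}})) = M"
    proof -
      have "fst (\<phi> M) - {{y,z}} = M''" using phiM yzM'' by auto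
      then have "insert {x',y} (insert {x, z} (fst (\<phi> M) - {{y,z}})) = M"
        using ey ez unfolding M''_def by auto
      then show ?thesis using phiM pz by simp
    qed
    note mem rec
  } note main = this
  show "\<phi> ` cycS M0 C \<subseteq> cycS M0' C' \<times> C'" using main(1) by (metis image_subsetI)
  show "inj_on \<phi> (cycS M0 C)"
  proof (rule inj_onI)
    fix M N assume M: "M \<in> cycS M0 C" and N: "N \<in> cycS M0 C" and eq: "\<phi> M = \<phi> N"
    have "snd (\<phi> M) = partner M x'" "snd (\<phi> N) = partner N x'" unfolding \<phi>_def by auto
    then have "partner M x' = partner N x'" using eq by simp
    then show "M = N" using main(2)[OF M] main(2)[OF N] eq unfolding \<phi>_def by (metis prod.sel(2))
  qed
qed


lemma cyc_bound: "finite C \<Longrightarrow> M0 \<in> pmV C \<Longrightarrow> card C = 2*a \<Longrightarrow> card (cycS M0 C) \<le> cycb a"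
proof (induction a arbitrary: C M0)
  case 0
  have "card (cycS M0 C) \<le> card (pmV C)"
    using card_mono[OF pmV_set_finite[OF 0(1)] cycS_sub] .
  also have "\<dots> = pmc 0" using pmV_card[OF 0(1)] 0(3) by simp
  finally show ?case by simp
next
  case (Suc b)
  show ?case
  proof (cases b)
    case 0
    have "card (cycS M0 C) \<le> card (pmV C)"
      using card_mono[OF pmV_set_finite[OF Suc(2)] cycS_sub] .
    also have "\<dots> = pmc 1" using pmV_card[OF Suc(2)] Suc(4) 0 by simp
    finally show ?thesis using 0 by simp
  next
    case (Suc b')
    have "C \<noteq> {}" using Suc.prems(3) by auto
    then obtain x where x: "x \<in> C" by blast
    have big: "card C > 2" using Suc.prems(3) Suc by simp
    define x' where "x' = partner M0 x"
    define C' where "C' = C - {x, x'}"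
    define M0' where "M0' = M0 - {{x, x'}}"
    define \<phi> where "\<phi> = (\<lambda>M. (insert {partner M x', partner M x} (M - {{x', partner M x'}, {x, partner M x}}), partner M x'))"
    have st: "\<phi> ` cycS M0 C \<subseteq> cycS M0' C' \<times> C'" "inj_on \<phi> (cycS M0 C)"
      using cyc_step[OF Suc.prems(1,2) x big] unfolding x'_def C'_def M0'_def \<phi>_def by auto
    have e0: "{x,x'} \<in> M0" using partner[OF Suc.prems(2) x] unfolding x'_def .
    have x'C: "x' \<in> C" "x' \<noteq> x" using partner_in[OF Suc.prems(2) x] unfolding x'_def by auto
    have M0': "M0' \<in> pmV C'" unfolding M0'_def C'_def using pmV_remove[OF Suc.prems(2) e0] .
    have finC': "finite C'" unfolding C'_def using Suc.prems(1) by simp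
    have cC': "card C' = 2*b"
    proof -
      have "card {x,x'} = 2" using x'C by auto
      then show ?thesis unfolding C'_def using Suc.prems(1,3) x x'C by (simp add: card_Diff_subset)
    qed
    have IH: "card (cycS M0' C') \<le> cycb b" using Suc.IH[OF finC' M0' cC'] .
    have fin2: "finite (cycS M0' C' \<times> C')"
      using finite_subset[OF cycS_sub pmV_set_finite[OF finC']] finC' by simp
    have "card (cycS M0 C) = card (\<phi> ` cycS M0 C)" using card_image[OF st(2)] by simp
    also have "\<dots> \<le> card (cycS M0' C' \<times> C')" using card_mono[OF fin2 st(1)] .
    also have "\<dots> = card (cycS M0' C') * (2*b)" using cC' by (simp add: card_cartesian_product)
    also have "\<dots> \<le> cycb b * (2*b)" using IH by simp
    also have "\<dots> = cycb (Suc b)" using Suc by simp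
    finally show ?thesis .
  qed
qed


lemma pm_union_card:
  assumes M: "M \<in> pmV V" and fin: "finite V" and F: "F \<subseteq> M"
  shows "card (\<Union>F) = 2 * card F"
proof -
  have finF: "finite F" using pmV_finite[OF fin M] F finite_subset by blast
  have c2: "\<And>e. e \<in> F \<Longrightarrow> card e = 2"
  proof -
    fix e assume "e \<in> F"
    then obtain u v where "e = {u,v}" "u \<noteq> v" using pmV_edge[OF M, of e] F by auto
    then show "card e = 2" by simp
  qed
  have fe: "\<And>e. e \<in> F \<Longrightarrow> finite e"
  proof -
    fix e assume "e \<in> F" then show "finite e" using c2 card.infinite by fastforce
  qed
  have pw: "pairwise disjnt F"
    unfolding pairwise_def disjnt_def
  proof (intro ballI impI)
    fix e f assume ef: "e \<in> F" "f \<in> F" "e \<noteq> f"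
    show "e \<inter> f = {}"
    proof (rule ccontr)
      assume "e \<inter> f \<noteq> {}"
      then obtain v where "v \<in> e" "v \<in> f" by blast
      then have "e = f" using pmV_uniq[OF M, of v e f] ef F by auto
      then show False using ef by simp
    qed
  qed
  have "card (\<Union>F) = sum card F" using card_Union_disjoint[OF pw fe] by simp
  also have "\<dots> = sum (\<lambda>_. 2) F" using c2 by simp
  finally show ?thesis by simp
qed

lemma pm_union_all: "M \<in> pmV V \<Longrightarrow> \<Union>M = V"
proof
  assume M: "M \<in> pmV V"
  show "\<Union>M \<subseteq> V" using pmV_sub[OF M] by auto
  show "V \<subseteq> \<Union>M"
  proof
    fix v assume "v \<in> V" then obtain e where "e \<in> M" "v \<in> e" using pmV_ex[OF M] by blast
    then show "v \<in> \<Union>M" by auto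
  qed
qed

lemma pm_card_M: "M \<in> pmV V \<Longrightarrow> finite V \<Longrightarrow> card V = 2 * card M"
  using pm_union_card[of M V M] pm_union_all[of M V] by simp

lemma closed_union:
  assumes M: "M \<in> pmV V" and CV: "C \<subseteq> V" and cl: "\<forall>e\<in>M. e \<subseteq> C \<or> e \<subseteq> V - C"
  shows "\<Union>(restr M C) = C"
proof
  show "\<Union>(restr M C) \<subseteq> C" unfolding restr_def by auto
  show "C \<subseteq> \<Union>(restr M C)"
  proof
    fix v assume v: "v \<in> C"
    then obtain e where e: "e \<in> M" "v \<in> e" using pmV_ex[OF M, of v] CV by auto
    then have "e \<subseteq> C" using cl v by auto
    then show "v \<in> \<Union>(restr M C)" using e unfolding restr_def by auto
  qed
qed

lemma closed_count:
  assumes M: "M \<in> pmV V" and fin: "finite V" and cV: "card V = 2*m"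
  shows "card {C. C \<subseteq> V \<and> (\<forall>e\<in>M. e \<subseteq> C \<or> e \<subseteq> V - C) \<and> card C = 2*a} \<le> m choose a"
proof -
  let ?A = "{C. C \<subseteq> V \<and> (\<forall>e\<in>M. e \<subseteq> C \<or> e \<subseteq> V - C) \<and> card C = 2*a}"
  let ?B = "{F. F \<subseteq> M \<and> card F = a}"
  have cM: "card M = m" using pm_card_M[OF M fin] cV by simp
  have finM: "finite M" using pmV_finite[OF fin M] .
  have inj: "inj_on (\<lambda>C. restr M C) ?A"
  proof (rule inj_onI)
    fix C D assume C: "C \<in> ?A" and D: "D \<in> ?A" and eq: "restr M C = restr M D"
    have "C = \<Union>(restr M C)" using closed_union[OF M] C by auto
    also have "\<dots> = \<Union>(restr M D)" using eq by simp
    also have "\<dots> = D" using closed_union[OF M] D by auto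
    finally show "C = D" .
  qed
  have img: "(\<lambda>C. restr M C) ` ?A \<subseteq> ?B"
  proof
    fix F assume "F \<in> (\<lambda>C. restr M C) ` ?A"
    then obtain C where C: "C \<in> ?A" "F = restr M C" by auto
    have sub: "F \<subseteq> M" using C unfolding restr_def by auto
    have "card C = card (\<Union>F)" using closed_union[OF M] C by auto
    also have "\<dots> = 2 * card F" using pm_union_card[OF M fin sub] .
    finally have "card F = a" using C by simp
    then show "F \<in> ?B" using sub by simp
  qed
  have finB: "finite ?B" using finM by simp
  have "card ?A = card ((\<lambda>C. restr M C) ` ?A)" using card_image[OF inj] by simp
  also have "\<dots> \<le> card ?B" using card_mono[OF finB img] .
  also have "\<dots> = m choose a" using n_subsets[OF finM] cM by simp
  finally show ?thesis .
qed

lemma binom_step: "Suc k * (n choose Suc k) = (n - k) * (n choose k)"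
  using binomial_absorption[of k n] binomial_absorb_comp[of n k] by simp

lemma Q_bound:
  assumes "1 \<le> a" "a \<le> m"
  shows "real a * real (m choose a) * real (cycb a) * real (pmc (m - a))
           \<le> real (pmc m) / 2 * (1 + 1 / (2 * real (m - a) + 1)) ^ a"
  using assms
proof (induction a rule: dec_induct)
  case base
  obtain m' where m': "m = Suc m'" using assms(2) base by (cases m) auto
  have "real m * real (pmc m') \<le> real (pmc m) / 2 * (1 + 1 / (2 * real m' + 1))"
  proof -
    have "real (pmc m) = (2 * real m' + 1) * real (pmc m')" using m' by (simp add: algebra_simps)
    then have "real (pmc m) / 2 * (1 + 1 / (2 * real m' + 1)) = real (pmc m') * (2 * real m' + 2) / 2"
      by (simp add: field_simps)
    also have "\<dots> = real m * real (pmc m')" using m' by (simp add: field_simps)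
    finally show ?thesis by simp
  qed
  then show ?case using m' by simp
next
  case (step a)
  have a1: "a \<ge> 1" using step by simp
  have am: "a < m" using step by simp
  obtain j where j: "m - a = Suc j" using am by (metis Suc_diff_Suc)
  have j2: "m - Suc a = j" using j by simp
  have IH: "real a * real (m choose a) * real (cycb a) * real (pmc (m - a))
           \<le> real (pmc m) / 2 * (1 + 1 / (2 * real (m - a) + 1)) ^ a" using step by simp
  have cy: "cycb (Suc a) = 2 * a * cycb a" using a1 by (cases a) auto
  have bin: "real (Suc a) * real (m choose Suc a) = real (m - a) * real (m choose a)"
    using binom_step[of a m] by (metis of_nat_mult)
  have pm: "real (pmc (m - a)) = (2 * real j + 1) * real (pmc j)" using j by (simp add: algebra_simps)
  define Q where "Q = real a * real (m choose a) * real (cycb a) * real (pmc (m - a))"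
  have "real (Suc a) * real (m choose Suc a) * real (cycb (Suc a)) * real (pmc (m - Suc a))
       = real (m - a) * real (m choose a) * (2 * real a * real (cycb a)) * real (pmc j)"
    using bin cy j2 by simp
  also have "\<dots> = Q * (2 * real (Suc j)) / (2 * real j + 1)"
    unfolding Q_def using pm j by (simp add: field_simps)
  also have "\<dots> = Q * (1 + 1 / (2 * real j + 1))" by (simp add: field_simps)
  also have "\<dots> \<le> real (pmc m) / 2 * (1 + 1 / (2 * real (m - a) + 1)) ^ a * (1 + 1 / (2 * real j + 1))"
    using IH unfolding Q_def by (intro mult_right_mono) auto
  also have "\<dots> \<le> real (pmc m) / 2 * (1 + 1 / (2 * real j + 1)) ^ a * (1 + 1 / (2 * real j + 1))"
  proof -
    have "1 / (2 * real (m - a) + 1) \<le> 1 / (2 * real j + 1)" using j by (simp add: frac_le)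
    then have "(1 + 1 / (2 * real (m - a) + 1)) ^ a \<le> (1 + 1 / (2 * real j + 1)) ^ a"
      by (intro power_mono) auto
    then show ?thesis by (intro mult_right_mono mult_left_mono) auto
  qed
  also have "\<dots> = real (pmc m) / 2 * (1 + 1 / (2 * real (m - Suc a) + 1)) ^ Suc a"
    using j2 by simp
  finally show ?case .
qed

lemma ratio_bound:
  assumes "1 \<le> a" "2 * a \<le> m"
  shows "real (m choose a) * real (cycb a) * real (pmc (m - a)) \<le> 2 / real a * real (pmc m)"
proof -
  have am: "a \<le> m" using assms by simp
  have Q: "real a * real (m choose a) * real (cycb a) * real (pmc (m - a))
           \<le> real (pmc m) / 2 * (1 + 1 / (2 * real (m - a) + 1)) ^ a" using Q_bound[OF assms(1) am] .
  define x where "x = 1 / (2 * real (m - a) + 1)"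
  have x0: "0 \<le> x" unfolding x_def by simp
  have "(1 + x) ^ a \<le> exp x ^ a" using x0 by (intro power_mono) (auto simp: exp_ge_add_one_self)
  also have "\<dots> = exp (real a * x)" by (simp add: exp_of_nat_mult)
  also have "\<dots> \<le> exp 1"
  proof -
    have "real a \<le> 2 * real (m - a) + 1" using assms by linarith
    then have "real a * x \<le> 1" unfolding x_def by (simp add: field_simps)
    then show ?thesis by simp
  qed
  also have "\<dots> \<le> 3" by (rule exp_le)
  finally have "(1 + x) ^ a \<le> 4" by simp
  then have "real (pmc m) / 2 * (1 + x) ^ a \<le> real (pmc m) / 2 * 4"
    by (intro mult_left_mono) auto
  then have "real a * real (m choose a) * real (cycb a) * real (pmc (m - a)) \<le> real (pmc m) / 2 * 4"
    using Q unfolding x_def by linarith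
  then have "real a * (real (m choose a) * real (cycb a) * real (pmc (m - a))) \<le> real (pmc m) / 2 * 4"
    by (simp add: mult.assoc)
  then show ?thesis using assms(1) by (simp add: field_simps)
qed


definition DL :: "nat \<Rightarrow> 'b set \<Rightarrow> 'b list set" where
  "DL r S = {cs. distinct cs \<and> length cs = r \<and> set cs \<subseteq> S}"

lemma DL_0: "DL 0 S = {[]}" unfolding DL_def by auto

lemma DL_finite: "finite S \<Longrightarrow> finite (DL r S)"
proof -
  assume "finite S"
  have "DL r S \<subseteq> {xs. set xs \<subseteq> S \<and> length xs = r}" unfolding DL_def by auto
  then show ?thesis using finite_lists_length_eq[OF \<open>finite S\<close>, of r] finite_subset by blast
qed

lemma DL_mono: "F \<subseteq> S \<Longrightarrow> DL r F \<subseteq> DL r S" unfolding DL_def by auto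

lemma DL_Suc: "DL (Suc r) S = (\<lambda>(c,cs). c#cs) ` (SIGMA c:S. DL r (S - {c}))"
proof
  show "DL (Suc r) S \<subseteq> (\<lambda>(c,cs). c#cs) ` (SIGMA c:S. DL r (S - {c}))"
  proof
    fix xs assume xs: "xs \<in> DL (Suc r) S"
    then obtain c cs where "xs = c # cs" unfolding DL_def by (cases xs) auto
    then show "xs \<in> (\<lambda>(c,cs). c#cs) ` (SIGMA c:S. DL r (S - {c}))"
      using xs unfolding DL_def by force
  qed
  show "(\<lambda>(c,cs). c#cs) ` (SIGMA c:S. DL r (S - {c})) \<subseteq> DL (Suc r) S"
    unfolding DL_def by auto
qed

lemma sum_DL_Suc:
  assumes "finite S"
  shows "(\<Sum>cs\<in>DL (Suc r) S. f cs) = (\<Sum>c\<in>S. \<Sum>cs\<in>DL r (S - {c}). f (c # cs))"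
proof -
  have inj: "inj_on (\<lambda>(c,cs). c#cs) (SIGMA c:S. DL r (S - {c}))"
    by (rule inj_onI) auto
  have fin: "\<And>c. finite (DL r (S - {c}))" using DL_finite assms by auto
  have "(\<Sum>cs\<in>DL (Suc r) S. f cs) = (\<Sum>p\<in>(SIGMA c:S. DL r (S - {c})). f ((\<lambda>(c,cs). c#cs) p))"
    unfolding DL_Suc using sum.reindex[OF inj] by simp
  also have "\<dots> = (\<Sum>c\<in>S. \<Sum>cs\<in>DL r (S - {c}). f (c # cs))"
    using sum.Sigma[OF assms, of "\<lambda>c. DL r (S - {c})", symmetric] fin
    by (simp add: case_prod_beta)
  finally show ?thesis .
qed

lemma prod_list_nonneg: "\<forall>x\<in>set xs. 0 \<le> (w x::real) \<Longrightarrow> 0 \<le> prod_list (map w xs)"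
  by (induction xs) auto

lemma DL_lower:
  assumes "finite F" "\<forall>c\<in>F. 0 \<le> w c \<and> w c \<le> H" "0 \<le> H"
  shows "(max 0 (sum w F - real r * H)) ^ r \<le> (\<Sum>cs\<in>DL r F. prod_list (map w cs))"
  using assms
proof (induction r arbitrary: F)
  case 0
  then show ?case by (simp add: DL_0)
next
  case (Suc r)
  define D where "D = max 0 (sum w F - real (Suc r) * H)"
  have D0: "0 \<le> D" unfolding D_def by simp
  have S0: "0 \<le> sum w F" using Suc.prems(2) by (simp add: sum_nonneg)
  have DS: "D \<le> sum w F" unfolding D_def using S0 Suc.prems(3) by auto
  have inner: "\<And>c. c \<in> F \<Longrightarrow> D ^ r \<le> (\<Sum>cs\<in>DL r (F - {c}). prod_list (map w cs))"
  proof -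
    fix c assume c: "c \<in> F"
    have IH: "(max 0 (sum w (F - {c}) - real r * H)) ^ r \<le> (\<Sum>cs\<in>DL r (F - {c}). prod_list (map w cs))"
      using Suc.IH[of "F - {c}"] Suc.prems by auto
    have "sum w (F - {c}) = sum w F - w c" using sum_diff1[of F w c] Suc.prems(1) c by simp
    then have "D \<le> max 0 (sum w (F - {c}) - real r * H)"
      unfolding D_def using Suc.prems(2) c by (auto simp: algebra_simps)
    then have "D ^ r \<le> (max 0 (sum w (F - {c}) - real r * H)) ^ r" using D0 by (intro power_mono) auto
    then show "D ^ r \<le> (\<Sum>cs\<in>DL r (F - {c}). prod_list (map w cs))" using IH by linarith
  qed
  have "D ^ Suc r = D * D ^ r" by simp
  also have "\<dots> \<le> sum w F * D ^ r" using DS D0 by (intro mult_right_mono) auto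
  also have "\<dots> = (\<Sum>c\<in>F. w c * D ^ r)" by (simp add: sum_distrib_right)
  also have "\<dots> \<le> (\<Sum>c\<in>F. w c * (\<Sum>cs\<in>DL r (F - {c}). prod_list (map w cs)))"
    using inner Suc.prems(2) by (intro sum_mono mult_left_mono) auto
  also have "\<dots> = (\<Sum>c\<in>F. \<Sum>cs\<in>DL r (F - {c}). prod_list (map w (c # cs)))"
    by (simp add: sum_distrib_left)
  also have "\<dots> = (\<Sum>cs\<in>DL (Suc r) F. prod_list (map w cs))"
    using sum_DL_Suc[OF Suc.prems(1), of "\<lambda>cs. prod_list (map w cs)" r] by simp
  finally show ?case unfolding D_def .
qed


definition Small :: "nat \<Rightarrow> 'a set \<Rightarrow> 'a set set \<Rightarrow> 'a set set \<Rightarrow> 'a set set" where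
  "Small s0 V M0 M1 = {C \<in> comps V (M0 \<union> M1). card C \<le> s0}"

definition Gs :: "nat \<Rightarrow> nat \<Rightarrow> (nat \<Rightarrow> real) \<Rightarrow> 'a set \<Rightarrow> 'a set set \<Rightarrow> 'a set set \<Rightarrow> real" where
  "Gs r s0 h V M0 M1 = (\<Sum>cs\<in>DL r (Small s0 V M0 M1). prod_list (map (\<lambda>C. h (card C)) cs))"

lemma Gs_nonneg: "\<forall>k. 0 \<le> h k \<Longrightarrow> 0 \<le> Gs r s0 h V M0 M1"
  unfolding Gs_def by (intro sum_nonneg prod_list_nonneg) auto

lemma Small_finite: "finite V \<Longrightarrow> M0 \<in> pmV V \<Longrightarrow> M1 \<in> pmV V \<Longrightarrow> finite (Small s0 V M0 M1)"
proof -
  assume a: "finite V" "M0 \<in> pmV V" "M1 \<in> pmV V"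
  have EV: "\<forall>e\<in>M0 \<union> M1. e \<subseteq> V" using pmV_sub[OF a(2)] pmV_sub[OF a(3)] by auto
  show ?thesis unfolding Small_def using comps_finite[OF EV a(1)] by simp
qed

lemma Gs_Suc:
  assumes fin: "finite V" and M0: "M0 \<in> pmV V" and M1: "M1 \<in> pmV V"
  shows "Gs (Suc r) s0 h V M0 M1 = (\<Sum>C\<in>Small s0 V M0 M1. h (card C) *
            Gs r s0 h (V - C) (restr M0 (V - C)) (restr M1 (V - C)))"
proof -
  have eq: "\<And>C. C \<in> Small s0 V M0 M1 \<Longrightarrow>
      Small s0 V M0 M1 - {C} = Small s0 (V - C) (restr M0 (V - C)) (restr M1 (V - C))"
  proof -
    fix C assume "C \<in> Small s0 V M0 M1"
    then have C: "C \<in> comps V (M0 \<union> M1)" unfolding Small_def by simp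
    interpret dec V M0 M1 C using fin M0 M1 C by unfold_locales
    show "Small s0 V M0 M1 - {C} = Small s0 (V - C) (restr M0 (V - C)) (restr M1 (V - C))"
      unfolding Small_def using rest_comps by auto
  qed
  have "Gs (Suc r) s0 h V M0 M1 = (\<Sum>C\<in>Small s0 V M0 M1. \<Sum>cs\<in>DL r (Small s0 V M0 M1 - {C}).
          prod_list (map (\<lambda>C. h (card C)) (C # cs)))"
    unfolding Gs_def using sum_DL_Suc[OF Small_finite[OF fin M0 M1]] by blast
  also have "\<dots> = (\<Sum>C\<in>Small s0 V M0 M1. h (card C) * (\<Sum>cs\<in>DL r (Small s0 V M0 M1 - {C}).
          prod_list (map (\<lambda>C. h (card C)) cs)))"
    by (simp add: sum_distrib_left)
  also have "\<dots> = (\<Sum>C\<in>Small s0 V M0 M1. h (card C) *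
            Gs r s0 h (V - C) (restr M0 (V - C)) (restr M1 (V - C)))"
    unfolding Gs_def using eq by (intro sum.cong) auto
  finally show ?thesis .
qed

lemma sum_over_comp:
  assumes fin: "finite V" and M0: "M0 \<in> pmV V" and CV: "C \<subseteq> V"
    and f0: "\<forall>B. 0 \<le> (f B::real)"
  shows "(\<Sum>M1\<in>{M1 \<in> pmV V. C \<in> comps V (M0 \<union> M1)}. f (restr M1 (V - C)))
     \<le> real (card (cycS (restr M0 C) C)) * (\<Sum>B\<in>pmV (V - C). f B)"
proof -
  let ?P = "{M1 \<in> pmV V. C \<in> comps V (M0 \<union> M1)}"
  let ?psi = "\<lambda>M1. (restr M1 C, restr M1 (V - C))"
  have inj: "inj_on ?psi ?P"
  proof (rule inj_onI)
    fix M N assume M: "M \<in> ?P" and N: "N \<in> ?P" and eq: "?psi M = ?psi N"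
    interpret dM: dec V M0 M C using fin M0 M by unfold_locales auto
    interpret dN: dec V M0 N C using fin M0 N by unfold_locales auto
    show "M = N" using dM.M1_split dN.M1_split eq by auto
  qed
  have img: "?psi ` ?P \<subseteq> cycS (restr M0 C) C \<times> pmV (V - C)"
  proof
    fix p assume "p \<in> ?psi ` ?P"
    then obtain M where M: "M \<in> ?P" "p = ?psi M" by auto
    interpret dM: dec V M0 M C using fin M0 M by unfold_locales auto
    show "p \<in> cycS (restr M0 C) C \<times> pmV (V - C)" using dM.cyc dM.pm1R M(2) by auto
  qed
  have finC: "finite C" using fin CV finite_subset by blast
  have fin2: "finite (cycS (restr M0 C) C \<times> pmV (V - C))"
    using finite_subset[OF cycS_sub pmV_set_finite[OF finC]] pmV_set_finite[of "V - C"] fin by simp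
  have "(\<Sum>M1\<in>?P. f (restr M1 (V - C))) = (\<Sum>p\<in>?psi ` ?P. f (snd p))"
    using sum.reindex[OF inj, of "\<lambda>p. f (snd p)"] by simp
  also have "\<dots> \<le> (\<Sum>p\<in>cycS (restr M0 C) C \<times> pmV (V - C). f (snd p))"
    using sum_mono2[OF fin2 img, of "\<lambda>p. f (snd p)"] f0 by auto
  also have "\<dots> = (\<Sum>(A,B)\<in>cycS (restr M0 C) C \<times> pmV (V - C). f B)"
    by (simp add: case_prod_beta)
  also have "\<dots> = (\<Sum>A\<in>cycS (restr M0 C) C. \<Sum>B\<in>pmV (V - C). f B)"
    by (rule sum.cartesian_product[symmetric])
  also have "\<dots> = real (card (cycS (restr M0 C) C)) * (\<Sum>B\<in>pmV (V - C). f B)" by simp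
  finally show ?thesis .
qed


definition Lc :: "nat \<Rightarrow> (nat \<Rightarrow> real) \<Rightarrow> real" where
  "Lc s0 h = (\<Sum>a\<in>{1..s0 div 2}. 2 * h (2*a) / real a)"

lemma main_bound:
  assumes h0: "\<forall>k. 0 \<le> h k"
  shows "finite V \<Longrightarrow> M0 \<in> pmV V \<Longrightarrow> card V = 2*m \<Longrightarrow> 2*r*s0 \<le> card V \<Longrightarrow>
     (\<Sum>M1\<in>pmV V. Gs r s0 h V M0 M1) \<le> real (pmc m) * Lc s0 h ^ r"
proof (induction r arbitrary: V M0 m)
  case 0
  have "\<And>M1. Gs 0 s0 h V M0 M1 = 1" unfolding Gs_def by (simp add: DL_0)
  then show ?case using pmV_card[OF 0(1,3)] by simp
next
  case (Suc r)
  note fin = Suc.prems(1) and M0 = Suc.prems(2) and cV = Suc.prems(3) and rs = Suc.prems(4)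
  have Lc0: "0 \<le> Lc s0 h" unfolding Lc_def using h0 by (intro sum_nonneg) auto
  define CC where "CC = {C. C \<subseteq> V \<and> C \<noteq> {} \<and> card C \<le> s0 \<and> (\<forall>e\<in>M0. e \<subseteq> C \<or> e \<subseteq> V - C)}"
  have finCC: "finite CC"
  proof -
    have "CC \<subseteq> Pow V" unfolding CC_def by auto
    then show ?thesis using fin finite_subset by blast
  qed
  have s0m: "s0 \<le> m" using rs cV by (cases s0) auto
  have sub: "\<And>M1. M1 \<in> pmV V \<Longrightarrow> Small s0 V M0 M1 \<subseteq> CC"
  proof
    fix M1 C assume M1: "M1 \<in> pmV V" and C: "C \<in> Small s0 V M0 M1"
    then have Cc: "C \<in> comps V (M0 \<union> M1)" "card C \<le> s0" unfolding Small_def by auto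
    interpret dec V M0 M1 C using fin M0 M1 Cc(1) by unfold_locales
    show "C \<in> CC" unfolding CC_def using CV Cne edge_cl0 Cc(2) by auto
  qed
  have even: "\<And>C. C \<in> CC \<Longrightarrow> card C = 2 * (card C div 2) \<and> 1 \<le> card C div 2 \<and>
        restr M0 C \<in> pmV C \<and> restr M0 (V - C) \<in> pmV (V - C) \<and> finite C"
  proof -
    fix C assume C: "C \<in> CC"
    then have CV: "C \<subseteq> V" and cl: "\<forall>e\<in>M0. e \<subseteq> C \<or> e \<subseteq> V - C" and ne: "C \<noteq> {}"
      unfolding CC_def by auto
    have cl': "\<forall>e\<in>M0. e \<subseteq> V - C \<or> e \<subseteq> V - (V - C)" using cl CV by (auto simp: Diff_Diff_Int inf.absorb2)
    have p: "restr M0 C \<in> pmV C" using pmV_restr[OF M0 CV cl] .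
    have p': "restr M0 (V - C) \<in> pmV (V - C)" using pmV_restr[OF M0 _ cl'] by auto
    have finC: "finite C" using fin CV finite_subset by blast
    have "card C = 2 * card (restr M0 C)" using pm_card_M[OF p finC] .
    moreover have "card C > 0" using finC ne by (simp add: card_gt_0_iff)
    ultimately show "card C = 2 * (card C div 2) \<and> 1 \<le> card C div 2 \<and>
        restr M0 C \<in> pmV C \<and> restr M0 (V - C) \<in> pmV (V - C) \<and> finite C"
      using p p' finC by auto
  qed
  define \<phi> where "\<phi> = (\<lambda>a. h (2*a) * (real (cycb a) * (real (pmc (m - a)) * Lc s0 h ^ r)))"
  let ?g = "\<lambda>M1 C. h (card C) * Gs r s0 h (V - C) (restr M0 (V - C)) (restr M1 (V - C))"
  have "(\<Sum>M1\<in>pmV V. Gs (Suc r) s0 h V M0 M1) = (\<Sum>M1\<in>pmV V. \<Sum>C\<in>Small s0 V M0 M1. ?g M1 C)"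
    using Gs_Suc[OF fin M0] by (intro sum.cong) auto
  also have "\<dots> = (\<Sum>M1\<in>pmV V. \<Sum>C\<in>{C. C \<in> CC \<and> C \<in> Small s0 V M0 M1}. ?g M1 C)"
  proof (rule sum.cong[OF refl])
    fix M1 assume "M1 \<in> pmV V"
    then have "Small s0 V M0 M1 = {C. C \<in> CC \<and> C \<in> Small s0 V M0 M1}" using sub by auto
    then show "(\<Sum>C\<in>Small s0 V M0 M1. ?g M1 C) = (\<Sum>C\<in>{C. C \<in> CC \<and> C \<in> Small s0 V M0 M1}. ?g M1 C)"
      by simp
  qed
  also have "\<dots> = (\<Sum>C\<in>CC. \<Sum>M1\<in>{M1. M1 \<in> pmV V \<and> C \<in> Small s0 V M0 M1}. ?g M1 C)"
    using sum.swap_restrict[OF pmV_set_finite[OF fin] finCC, of ?g "\<lambda>M1 C. C \<in> Small s0 V M0 M1"] .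
  also have "\<dots> \<le> (\<Sum>C\<in>CC. \<phi> (card C div 2))"
  proof (intro sum_mono)
    fix C assume C: "C \<in> CC"
    note ev = even[OF C]
    define a where "a = card C div 2"
    have CV: "C \<subseteq> V" and cs0: "card C \<le> s0" using C unfolding CC_def by auto
    have P: "{M1. M1 \<in> pmV V \<and> C \<in> Small s0 V M0 M1} = {M1 \<in> pmV V. C \<in> comps V (M0 \<union> M1)}"
      unfolding Small_def using cs0 by auto
    let ?f = "Gs r s0 h (V - C) (restr M0 (V - C))"
    have f0: "\<forall>B. 0 \<le> ?f B" using Gs_nonneg[OF h0] by auto
    have cVC: "card (V - C) = 2 * (m - a)"
    proof -
      have "card (V - C) = card V - card C" using CV fin by (simp add: card_Diff_subset finite_subset)
      moreover have "card C = 2 * a" using ev unfolding a_def by simp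
      ultimately show ?thesis using cV by simp
    qed
    have rsVC: "2 * r * s0 \<le> card (V - C)"
    proof -
      have "card (V - C) = card V - card C" using CV fin by (simp add: card_Diff_subset finite_subset)
      then show ?thesis using rs cs0 by (simp add: algebra_simps)
    qed
    have IH: "(\<Sum>B\<in>pmV (V - C). ?f B) \<le> real (pmc (m - a)) * Lc s0 h ^ r"
      using Suc.IH[of "V - C" "restr M0 (V - C)" "m - a"] fin ev cVC rsVC by auto
    have cyc: "card (cycS (restr M0 C) C) \<le> cycb a"
      using cyc_bound[of C "restr M0 C" a] ev unfolding a_def by auto
    have "(\<Sum>M1\<in>{M1. M1 \<in> pmV V \<and> C \<in> Small s0 V M0 M1}. ?g M1 C)
        = h (card C) * (\<Sum>M1\<in>{M1 \<in> pmV V. C \<in> comps V (M0 \<union> M1)}. ?f (restr M1 (V - C)))"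
      unfolding P by (simp add: sum_distrib_left)
    also have "\<dots> \<le> h (card C) * (real (card (cycS (restr M0 C) C)) * (\<Sum>B\<in>pmV (V - C). ?f B))"
      using sum_over_comp[OF fin M0 CV f0] h0 by (intro mult_left_mono) auto
    also have "\<dots> \<le> h (card C) * (real (cycb a) * (real (pmc (m - a)) * Lc s0 h ^ r))"
    proof -
      have s0': "0 \<le> (\<Sum>B\<in>pmV (V - C). ?f B)" using f0 by (intro sum_nonneg) auto
      have "real (card (cycS (restr M0 C) C)) * (\<Sum>B\<in>pmV (V - C). ?f B)
          \<le> real (cycb a) * (real (pmc (m - a)) * Lc s0 h ^ r)"
        using cyc IH s0' by (intro mult_mono) auto
      then show ?thesis using h0 by (intro mult_left_mono) auto
    qed
    also have "\<dots> = \<phi> (card C div 2)" unfolding \<phi>_def a_def using ev by metis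
    finally show "(\<Sum>M1\<in>{M1. M1 \<in> pmV V \<and> C \<in> Small s0 V M0 M1}. ?g M1 C) \<le> \<phi> (card C div 2)" .
  qed
  also have "\<dots> = (\<Sum>a\<in>(\<lambda>C. card C div 2) ` CC. \<Sum>C\<in>{C \<in> CC. card C div 2 = a}. \<phi> (card C div 2))"
    using sum.image_gen[OF finCC, of "\<lambda>C. \<phi> (card C div 2)" "\<lambda>C. card C div 2"] .
  also have "\<dots> = (\<Sum>a\<in>(\<lambda>C. card C div 2) ` CC. real (card {C \<in> CC. card C div 2 = a}) * \<phi> a)"
    by (intro sum.cong refl) auto
  also have "\<dots> \<le> (\<Sum>a\<in>{1..s0 div 2}. real (card {C \<in> CC. card C div 2 = a}) * \<phi> a)"
  proof (rule sum_mono2)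
    show "finite {1..s0 div 2}" by simp
    show "(\<lambda>C. card C div 2) ` CC \<subseteq> {1..s0 div 2}"
    proof
      fix a assume "a \<in> (\<lambda>C. card C div 2) ` CC"
      then obtain C where C: "C \<in> CC" "a = card C div 2" by auto
      have "card C \<le> s0" using C unfolding CC_def by auto
      then show "a \<in> {1..s0 div 2}" using even[OF C(1)] C(2) by auto
    qed
    show "\<And>a. a \<in> {1..s0 div 2} - (\<lambda>C. card C div 2) ` CC \<Longrightarrow> 0 \<le> real (card {C \<in> CC. card C div 2 = a}) * \<phi> a"
      unfolding \<phi>_def using h0 Lc0 by auto
  qed
  also have "\<dots> \<le> (\<Sum>a\<in>{1..s0 div 2}. 2 * h (2*a) / real a * (real (pmc m) * Lc s0 h ^ r))"
  proof (intro sum_mono)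
    fix a assume a: "a \<in> {1..s0 div 2}"
    have sub2: "{C \<in> CC. card C div 2 = a} \<subseteq> {C. C \<subseteq> V \<and> (\<forall>e\<in>M0. e \<subseteq> C \<or> e \<subseteq> V - C) \<and> card C = 2*a}"
      using even unfolding CC_def by auto
    have fin3: "finite {C. C \<subseteq> V \<and> (\<forall>e\<in>M0. e \<subseteq> C \<or> e \<subseteq> V - C) \<and> card C = 2*a}"
    proof -
      have "{C. C \<subseteq> V \<and> (\<forall>e\<in>M0. e \<subseteq> C \<or> e \<subseteq> V - C) \<and> card C = 2*a} \<subseteq> Pow V" by auto
      then show ?thesis using fin finite_subset by blast
    qed
    have cc: "card {C \<in> CC. card C div 2 = a} \<le> m choose a"
      using card_mono[OF fin3 sub2] closed_count[OF M0 fin cV, of a] by linarith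
    have am: "2 * a \<le> m" using a s0m by auto
    have rb: "real (m choose a) * real (cycb a) * real (pmc (m - a)) \<le> 2 / real a * real (pmc m)"
      using ratio_bound[of a m] a am by auto
    have ph0: "0 \<le> \<phi> a" unfolding \<phi>_def using h0 Lc0 by auto
    have "real (card {C \<in> CC. card C div 2 = a}) * \<phi> a \<le> real (m choose a) * \<phi> a"
      using cc ph0 by (intro mult_right_mono) auto
    also have "\<dots> = h (2*a) * (real (m choose a) * real (cycb a) * real (pmc (m - a))) * Lc s0 h ^ r"
      unfolding \<phi>_def by (simp add: algebra_simps)
    also have "\<dots> \<le> h (2*a) * (2 / real a * real (pmc m)) * Lc s0 h ^ r"
      using rb h0 Lc0 by (intro mult_right_mono mult_left_mono) auto
    also have "\<dots> = 2 * h (2*a) / real a * (real (pmc m) * Lc s0 h ^ r)" by (simp add: algebra_simps)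
    finally show "real (card {C \<in> CC. card C div 2 = a}) * \<phi> a \<le> 2 * h (2*a) / real a * (real (pmc m) * Lc s0 h ^ r)" .
  qed
  also have "\<dots> = (\<Sum>a\<in>{1..s0 div 2}. 2 * h (2*a) / real a) * (real (pmc m) * Lc s0 h ^ r)"
    by (rule sum_distrib_right[symmetric])
  also have "\<dots> = real (pmc m) * Lc s0 h ^ Suc r"
    unfolding Lc_def[symmetric] by simp
  finally show ?case .
qed


lemma markov:
  assumes "finite X" "\<forall>x\<in>X. 0 \<le> g x" "0 < (t::real)"
  shows "real (card {x\<in>X. t \<le> g x}) * t \<le> (\<Sum>x\<in>X. g x)"
proof -
  have "real (card {x\<in>X. t \<le> g x}) * t = (\<Sum>x\<in>{x\<in>X. t \<le> g x}. t)" by simp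
  also have "\<dots> \<le> (\<Sum>x\<in>{x\<in>X. t \<le> g x}. g x)" by (rule sum_mono) auto
  also have "\<dots> \<le> (\<Sum>x\<in>X. g x)" using assms by (intro sum_mono2) auto
  finally show ?thesis .
qed

lemma harm_bound: "1 \<le> N \<Longrightarrow> (\<Sum>a\<in>{1..N}. 1 / real a) \<le> 1 + ln (real N)"
proof (induction N rule: dec_induct)
  case base then show ?case by simp
next
  case (step N)
  have N0: "0 < real N" using step by simp
  have "ln (real N / real (Suc N)) \<le> real N / real (Suc N) - 1"
    using ln_le_minus_one[of "real N / real (Suc N)"] N0 by simp
  also have "\<dots> = - (1 / real (Suc N))" by (simp add: field_simps)
  finally have "1 / real (Suc N) \<le> ln (real (Suc N)) - ln (real N)"
    using N0 by (simp add: ln_div)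
  moreover have "(\<Sum>a\<in>{1..Suc N}. 1 / real a) = (\<Sum>a\<in>{1..N}. 1 / real a) + 1 / real (Suc N)"
    using step by simp
  ultimately show ?case using step by linarith
qed

lemma Lc_one: "1 \<le> n \<Longrightarrow> s div 2 \<le> n \<Longrightarrow> Lc s (\<lambda>_. 1) \<le> 2 * (1 + ln (real n))"
proof -
  assume n: "1 \<le> n" and s: "s div 2 \<le> n"
  have "Lc s (\<lambda>_. 1) = 2 * (\<Sum>a\<in>{1..s div 2}. 1 / real a)"
    unfolding Lc_def by (simp add: sum_distrib_left)
  also have "\<dots> \<le> 2 * (1 + ln (real n))"
  proof (cases "1 \<le> s div 2")
    case True
    have "(\<Sum>a\<in>{1..s div 2}. 1 / real a) \<le> 1 + ln (real (s div 2))" using harm_bound[OF True] .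
    also have "\<dots> \<le> 1 + ln (real n)" using True s by simp
    finally show ?thesis by simp
  next
    case False
    then have "{1..s div 2} = {}" by auto
    moreover have "0 \<le> ln (real n)" using n by simp
    ultimately show ?thesis by simp
  qed
  finally show ?thesis .
qed

lemma Lc_real: "Lc s (\<lambda>k. real k) \<le> 2 * real s"
proof -
  have "Lc s (\<lambda>k. real k) = (\<Sum>a\<in>{1..s div 2}. 4)"
    unfolding Lc_def by (intro sum.cong) auto
  also have "\<dots> = 4 * real (s div 2)" by simp
  also have "\<dots> \<le> 2 * real s" by linarith
  finally show ?thesis .
qed

lemma event_a:
  assumes fin: "finite V" and M0: "M0 \<in> pmV V" and M1: "M1 \<in> pmV V" and r: "1 \<le> r"
    and s: "s = card V div (2*r)" and Y0: "0 \<le> Y0"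
    and X: "real (card (comps V (M0 \<union> M1))) > Y0 + 3 * real r"
  shows "Y0 ^ r \<le> Gs r s (\<lambda>_. 1) V M0 M1"
proof -
  let ?K = "comps V (M0 \<union> M1)"
  have EV: "\<forall>e\<in>M0 \<union> M1. e \<subseteq> V" using pmV_sub[OF M0] pmV_sub[OF M1] by auto
  have finK: "finite ?K" using comps_finite[OF EV fin] .
  define Lg where "Lg = {C \<in> ?K. s < card C}"
  define F where "F = Small s V M0 M1"
  have KF: "?K = F \<union> Lg" "F \<inter> Lg = {}" unfolding F_def Lg_def Small_def by auto
  have finF: "finite F" "finite Lg" using finK KF by auto
  have "real (card Lg) * real (Suc s) \<le> real (card (\<Union>Lg))"
  proof -
    have "real (card Lg) * real (Suc s) = (\<Sum>C\<in>Lg. real (Suc s))" by simp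
    also have "\<dots> \<le> (\<Sum>C\<in>Lg. real (card C))" unfolding Lg_def by (intro sum_mono) auto
    also have "\<dots> = real (\<Sum>C\<in>Lg. card C)" by simp
    also have "\<dots> = real (card (\<Union>Lg))" using comps_card_sum[OF EV fin, of Lg] unfolding Lg_def by auto
    finally show ?thesis .
  qed
  also have "\<dots> \<le> real (card V)"
  proof -
    have "\<Union>Lg \<subseteq> V" unfolding Lg_def using comp_sub[OF EV] by auto
    then show ?thesis using card_mono[OF fin] by simp
  qed
  also have "\<dots> < real (Suc s) * (2 * real r)"
  proof -
    have m: "card V mod (2*r) < 2*r" using r by simp
    have d: "s * (2*r) + card V mod (2*r) = card V" unfolding s by (rule div_mult_mod_eq)
    have "card V < Suc s * (2*r)" using d m by (metis add_less_cancel_left mult_Suc add.commute)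
    then have "real (card V) < real (Suc s * (2*r))" by linarith
    then show ?thesis by (simp add: algebra_simps)
  qed
  finally have "real (card Lg) < 2 * real r" by (simp add: mult.commute)
  moreover have "card ?K = card F + card Lg" using KF finF card_Un_disjoint by metis
  ultimately have cF: "real (card F) - real r > Y0" using X by linarith
  have "(max 0 (sum (\<lambda>C. (\<lambda>_. 1::real) (card C)) F - real r * 1)) ^ r \<le>
        (\<Sum>cs\<in>DL r F. prod_list (map (\<lambda>C. (\<lambda>_. 1::real) (card C)) cs))"
    using DL_lower[OF finF(1), of "\<lambda>C. (\<lambda>_. 1::real) (card C)" 1 r] by auto
  moreover have "Y0 ^ r \<le> (max 0 (sum (\<lambda>C. (\<lambda>_. 1::real) (card C)) F - real r * 1)) ^ r"
    using cF Y0 by (intro power_mono) auto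
  ultimately show ?thesis unfolding Gs_def F_def by simp
qed

lemma event_b:
  assumes fin: "finite V" and M0: "M0 \<in> pmV V" and M1: "M1 \<in> pmV V"
    and Bv: "0 \<le> Bv" and rs: "real r * real s \<le> Bv / 2"
    and Y: "real (card (\<Union>(Small s V M0 M1))) \<ge> Bv"
  shows "(Bv/2) ^ r \<le> Gs r s (\<lambda>k. real k) V M0 M1"
proof -
  have EV: "\<forall>e\<in>M0 \<union> M1. e \<subseteq> V" using pmV_sub[OF M0] pmV_sub[OF M1] by auto
  define F where "F = Small s V M0 M1"
  have finF: "finite F" unfolding F_def using Small_finite[OF fin M0 M1] .
  have sumF: "sum (\<lambda>C. real (card C)) F = real (card (\<Union>F))"
    using comps_card_sum[OF EV fin, of F] unfolding F_def Small_def by (simp flip: of_nat_sum)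
  have w: "\<forall>C\<in>F. 0 \<le> real (card C) \<and> real (card C) \<le> real s" unfolding F_def Small_def by auto
  have "(max 0 (sum (\<lambda>C. real (card C)) F - real r * real s)) ^ r \<le>
        (\<Sum>cs\<in>DL r F. prod_list (map (\<lambda>C. real (card C)) cs))"
    using DL_lower[OF finF w] by simp
  moreover have "(Bv/2) ^ r \<le> (max 0 (sum (\<lambda>C. real (card C)) F - real r * real s)) ^ r"
    using sumF Y rs Bv unfolding F_def by (intro power_mono) auto
  ultimately show ?thesis unfolding Gs_def F_def by simp
qed


lemma per_n:
  fixes n :: nat and M0 :: "nat set set"
  defines "L1 \<equiv> ln (real n)"
  defines "L2 \<equiv> ln L1"
  defines "L3 \<equiv> ln L2"
  defines "qn \<equiv> 800 * L2 / (L1 * L3)"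
  defines "tn \<equiv> L1 * L3 / (400 * L2)"
  assumes ev: "even n" and M0: "M0 \<in> perfect_matchings n"
    and c1': "exp 6 \<le> real n" and c2: "0 < L3" and c3: "qn \<le> 1" and c4: "n_b n \<le> real n"
  shows "fail_prob n M0 \<le> 2 / real n + qn powr (tn - 1)"
proof -
  define V where "V = {..<n}"
  define m where "m = n div 2"
  have cV: "card V = 2*m" unfolding V_def m_def using ev by simp
  have finV: "finite V" unfolding V_def by simp
  have M0V: "M0 \<in> pmV V" using M0 unfolding V_def pm_eq .
  have pmeq: "perfect_matchings n = pmV V" unfolding V_def pm_eq ..
  have pmc0: "0 < real (pmc m)" using pmc_pos by simp
  have cpm: "real (card (perfect_matchings n)) = real (pmc m)" using pmV_card[OF finV cV] pmeq by simp
  have x0: "0 < real n" using c1' exp_gt_zero[of 6] by linarith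
  have c1: "6 \<le> L1" unfolding L1_def using c1' x0 by (metis ln_exp ln_le_cancel_iff exp_gt_zero)
  have L10: "0 < L1" using c1 by simp
  have L2p: "0 < L2" unfolding L2_def using c1 by simp
  have L2gt: "1 < L2" using c2 L2p unfolding L3_def by (simp add: ln_gt_zero_iff)
  have n1: "1 \<le> n" using x0 by simp
  have L2pos: "0 < L2" using L2gt by simp
  have nc: "n_c n = 200 * real n / L1" unfolding n_c_def L1_def by simp
  have nb: "n_b n = real n * L3 / L2" unfolding n_b_def L1_def L2_def L3_def by simp
  have nc0: "0 < n_c n" using nc x0 L10 by simp
  have nb0: "0 < n_b n" using nb x0 c2 L2pos by simp
  define lg where "lg = log 2 (real n)"
  have lgL: "L1 \<le> lg"
  proof -
    have l2: "0 < ln (2::real)" "ln (2::real) \<le> 1" using ln_le_minus_one[of 2] by auto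
    have e: "lg = L1 / ln 2" unfolding lg_def L1_def log_def by simp
    then have lg0: "0 < lg" using l2 L10 by simp
    have "lg * ln 2 \<le> lg * 1" using l2 lg0 by (intro mult_left_mono) auto
    moreover have "lg * ln 2 = L1" using e l2 by simp
    ultimately show ?thesis by simp
  qed
  define ra where "ra = nat \<lfloor>lg\<rfloor>"
  have ra1: "1 \<le> ra" using lgL c1 unfolding ra_def by linarith
  have ralg: "real ra \<le> lg" "lg - 1 \<le> real ra" unfolding ra_def using lgL c1 by linarith+
  define sa where "sa = card V div (2*ra)"
  have rsa: "2*ra*sa \<le> card V" unfolding sa_def by (metis div_mult_self1_is_m less_eq_div_iff_mult_less_eq mult.commute ra1 le_refl zero_less_mult_iff zero_less_numeral less_le_trans zero_less_one div_le_dividend times_div_less_eq_dividend)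
  define Y0 where "Y0 = 7 * lg"
  have Y00: "0 < Y0" unfolding Y0_def using lgL c1 by simp
  define Ga where "Ga = (\<lambda>M1. Gs ra sa (\<lambda>_. 1) V M0 M1)"
  define bada where "bada = {M1 \<in> pmV V. Y0 ^ ra \<le> Ga M1}"
  have sumGa: "(\<Sum>M1\<in>pmV V. Ga M1) \<le> real (pmc m) * (2 * (1 + L1)) ^ ra"
  proof -
    have "(\<Sum>M1\<in>pmV V. Ga M1) \<le> real (pmc m) * Lc sa (\<lambda>_. 1) ^ ra"
      unfolding Ga_def using main_bound[of "\<lambda>_. 1" V M0 m ra sa] finV M0V cV rsa by auto
    also have "\<dots> \<le> real (pmc m) * (2 * (1 + L1)) ^ ra"
    proof -
      have "sa div 2 \<le> n" unfolding sa_def V_def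
        using div_le_dividend[of "n div (2*ra)" 2] div_le_dividend[of n "2*ra"] by (simp only: card_lessThan)
      then have "Lc sa (\<lambda>_. 1) \<le> 2 * (1 + L1)" using Lc_one[OF n1] unfolding L1_def by simp
      moreover have "0 \<le> Lc sa (\<lambda>_. 1)" unfolding Lc_def by (intro sum_nonneg) auto
      ultimately show ?thesis using pmc0 by (intro mult_left_mono power_mono) auto
    qed
    finally show ?thesis .
  qed
  have cbada: "real (card bada) / real (pmc m) \<le> 2 / real n"
  proof -
    have "real (card bada) * Y0 ^ ra \<le> (\<Sum>M1\<in>pmV V. Ga M1)"
    proof -
      have "\<forall>x\<in>pmV V. 0 \<le> Ga x" unfolding Ga_def using Gs_nonneg[of "\<lambda>_. 1"] by auto
      moreover have "0 < Y0 ^ ra" using Y00 by simp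
      ultimately show ?thesis unfolding bada_def using markov[OF pmV_set_finite[OF finV], of Ga "Y0 ^ ra"] by blast
    qed
    then have "real (card bada) * Y0 ^ ra \<le> real (pmc m) * (2 * (1 + L1)) ^ ra" using sumGa by linarith
    then have "real (card bada) / real (pmc m) \<le> (2 * (1 + L1)) ^ ra / Y0 ^ ra"
      using pmc0 Y00 by (simp add: field_simps)
    also have "\<dots> = (2 * (1 + L1) / Y0) ^ ra" by (simp add: power_divide)
    also have "\<dots> \<le> (1/2) ^ ra"
    proof -
      have "2 * (1 + L1) / Y0 \<le> 1/2" unfolding Y0_def using lgL c1 by (simp add: field_simps)
      then show ?thesis using Y00 L10 by (intro power_mono) auto
    qed
    also have "\<dots> = (1/2) powr (real ra)" by (simp add: powr_realpow)
    also have "\<dots> \<le> (1/2) powr (lg - 1)" using ralg by (intro powr_mono') auto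
    also have "\<dots> = 2 / real n"
    proof -
      have "(1/2::real) powr (lg - 1) = 2 powr (1 - lg)"
        by (simp add: powr_divide powr_minus_divide[symmetric] powr_minus)
      also have "\<dots> = 2 / 2 powr lg" by (simp add: powr_diff)
      also have "\<dots> = 2 / real n" unfolding lg_def using x0 by simp
      finally show ?thesis .
    qed
    finally show ?thesis .
  qed
  define sb where "sb = nat \<lfloor>n_c n\<rfloor>"
  define rb where "rb = nat \<lfloor>tn\<rfloor>"
  have tn0: "0 < tn" unfolding tn_def using L10 c2 L2pos by simp
  have sbr: "real sb \<le> n_c n" unfolding sb_def using nc0 by linarith
  have rbr: "real rb \<le> tn" "tn - 1 \<le> real rb" unfolding rb_def using tn0 by linarith+
  have tnc: "tn * n_c n = n_b n / 2" unfolding tn_def nc nb using L10 L2pos x0 by (simp add: field_simps)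
  have rsb: "real rb * real sb \<le> n_b n / 2"
  proof -
    have "real rb * real sb \<le> tn * n_c n" using rbr sbr by (intro mult_mono) auto
    then show ?thesis using tnc by simp
  qed
  have rsb2: "2*rb*sb \<le> card V"
  proof -
    have "real (2*rb*sb) \<le> n_b n" using rsb by simp
    then have "real (2*rb*sb) \<le> real n" using c4 by linarith
    then have "2 * rb * sb \<le> n" by (simp only: of_nat_le_iff)
    then show ?thesis unfolding V_def by simp
  qed
  define Gb where "Gb = (\<lambda>M1. Gs rb sb (\<lambda>k. real k) V M0 M1)"
  define badb where "badb = {M1 \<in> pmV V. (n_b n / 2) ^ rb \<le> Gb M1}"
  have sumGb: "(\<Sum>M1\<in>pmV V. Gb M1) \<le> real (pmc m) * (2 * n_c n) ^ rb"
  proof -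
    have "(\<Sum>M1\<in>pmV V. Gb M1) \<le> real (pmc m) * Lc sb (\<lambda>k. real k) ^ rb"
      unfolding Gb_def using main_bound[of "\<lambda>k. real k" V M0 m rb sb] finV M0V cV rsb2 by auto
    also have "\<dots> \<le> real (pmc m) * (2 * n_c n) ^ rb"
    proof -
      have "Lc sb (\<lambda>k. real k) \<le> 2 * n_c n" using Lc_real[of sb] sbr by linarith
      moreover have "0 \<le> Lc sb (\<lambda>k. real k)" unfolding Lc_def by (intro sum_nonneg) auto
      ultimately show ?thesis using pmc0 by (intro mult_left_mono power_mono) auto
    qed
    finally show ?thesis .
  qed
  have q_eq: "2 * n_c n / (n_b n / 2) = qn"
    unfolding qn_def nc nb using L10 L2pos x0 c2 by (simp add: field_simps)
  have q0: "0 < qn" unfolding qn_def using L10 L2pos c2 by simp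
  have cbadb: "real (card badb) / real (pmc m) \<le> qn powr (tn - 1)"
  proof -
    have B0: "0 < (n_b n / 2) ^ rb" using nb0 by simp
    have "real (card badb) * (n_b n / 2) ^ rb \<le> (\<Sum>M1\<in>pmV V. Gb M1)"
    proof -
      have "\<forall>x\<in>pmV V. 0 \<le> Gb x" unfolding Gb_def using Gs_nonneg[of "\<lambda>k. real k"] by auto
      then show ?thesis unfolding badb_def using markov[OF pmV_set_finite[OF finV], of Gb "(n_b n / 2) ^ rb"] B0 by blast
    qed
    then have "real (card badb) * (n_b n / 2) ^ rb \<le> real (pmc m) * (2 * n_c n) ^ rb" using sumGb by linarith
    then have "real (card badb) / real (pmc m) \<le> (2 * n_c n) ^ rb / (n_b n / 2) ^ rb"
      using pmc0 B0 by (simp add: field_simps)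
    also have "\<dots> = (2 * n_c n / (n_b n / 2)) ^ rb" by (rule power_divide[symmetric])
    also have "\<dots> = qn ^ rb" using q_eq by (simp only:)
    also have "\<dots> = qn powr (real rb)" using q0 by (simp add: powr_realpow)
    also have "\<dots> \<le> qn powr (tn - 1)" using rbr q0 c3 by (intro powr_mono') auto
    finally show ?thesis .
  qed
  have bad_sub: "{M1 \<in> perfect_matchings n. \<not> good_event n M0 M1} \<subseteq> bada \<union> badb"
  proof
    fix M1 assume "M1 \<in> {M1 \<in> perfect_matchings n. \<not> good_event n M0 M1}"
    then have M1: "M1 \<in> pmV V" and ng: "\<not> good_event n M0 M1" using pmeq by auto
    have EV: "\<forall>e\<in>M0 \<union> M1. e \<subseteq> V" using pmV_sub[OF M0V] pmV_sub[OF M1] by auto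
    have ceq: "components n (M0 \<union> M1) = comps V (M0 \<union> M1)" unfolding V_def components_eq ..
    have seq: "{C \<in> components n (M0 \<union> M1). real (card C) \<le> n_c n} = Small sb V M0 M1"
    proof -
      have "\<And>C. real (card C) \<le> n_c n \<longleftrightarrow> card C \<le> sb" unfolding sb_def using nc0 by linarith
      then show ?thesis unfolding ceq Small_def by auto
    qed
    show "M1 \<in> bada \<union> badb"
    proof (cases "real (card (components n (M0 \<union> M1))) \<le> 10 * log 2 (real n)")
      case True
      then have Y: "real (card (\<Union>(Small sb V M0 M1))) > n_b n" using ng seq unfolding good_event_def by auto
      have "(n_b n / 2) ^ rb \<le> Gb M1"
        unfolding Gb_def using event_b[OF finV M0V M1 _ rsb] Y nb0 by auto
      then show ?thesis unfolding badb_def using M1 by auto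
    next
      case False
      then have X: "real (card (comps V (M0 \<union> M1))) > Y0 + 3 * real ra"
        using ceq ralg unfolding Y0_def lg_def by auto
      have "Y0 ^ ra \<le> Ga M1" unfolding Ga_def
        using event_a[OF finV M0V M1 ra1 sa_def _ X] Y00 by auto
      then show ?thesis unfolding bada_def using M1 by auto
    qed
  qed
  have "real (card {M1 \<in> perfect_matchings n. \<not> good_event n M0 M1}) \<le> real (card (bada \<union> badb))"
  proof -
    have "finite (bada \<union> badb)" unfolding bada_def badb_def using pmV_set_finite[OF finV] by auto
    then show ?thesis using card_mono[OF _ bad_sub] by simp
  qed
  also have "\<dots> \<le> real (card bada) + real (card badb)" using card_Un_le[of bada badb] by linarith
  finally have "fail_prob n M0 \<le> (real (card bada) + real (card badb)) / real (pmc m)"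
    unfolding fail_prob_def cpm using pmc0 by (simp add: divide_right_mono)
  also have "\<dots> = real (card bada) / real (pmc m) + real (card badb) / real (pmc m)"
    by (simp add: add_divide_distrib)
  also have "\<dots> \<le> 2 / real n + qn powr (tn - 1)" using cbada cbadb by linarith
  finally show ?thesis .
qed


lemma ev_real: "eventually P at_top \<Longrightarrow> eventually (\<lambda>n. P (real n)) sequentially"
  using filterlim_real_sequentially by (simp add: filterlim_iff)

theorem mainTheorem8:
  fixes M0 :: "nat \<Rightarrow> nat set set"
  assumes "\<And>n. even n \<Longrightarrow> M0 n \<in> perfect_matchings n"
  shows "\<forall>\<epsilon>>0. \<forall>\<^sub>F n in sequentially.
           even n \<longrightarrow> fail_prob n (M0 n) \<le> \<epsilon> * real n powr (-0.51)"
proof (intro allI impI)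
  fix \<epsilon> :: real assume \<epsilon>: "\<epsilon> > 0"
  have a1: "eventually (\<lambda>x::real. exp 6 \<le> x) at_top" by (rule eventually_ge_at_top)
  have a2: "eventually (\<lambda>x::real. 0 < ln (ln (ln x))) at_top" by real_asymp
  have a3: "eventually (\<lambda>x::real. 800 * ln (ln x) / (ln x * ln (ln (ln x))) \<le> 1) at_top" by real_asymp
  have a4: "eventually (\<lambda>x::real. x * ln (ln (ln x)) / ln (ln x) \<le> x) at_top" by real_asymp
  have lim: "((\<lambda>x::real. (2 / x + (800 * ln (ln x) / (ln x * ln (ln (ln x)))) powr (ln x * ln (ln (ln x)) / (400 * ln (ln x)) - 1)) / x powr (-0.51)) \<longlongrightarrow> 0) at_top"
    by real_asymp
  have a5: "eventually (\<lambda>x::real. (2 / x + (800 * ln (ln x) / (ln x * ln (ln (ln x)))) powr (ln x * ln (ln (ln x)) / (400 * ln (ln x)) - 1)) / x powr (-0.51) < \<epsilon>) at_top"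
    using order_tendstoD(2)[OF lim \<epsilon>] .
  have all: "eventually (\<lambda>x::real. exp 6 \<le> x \<and> 0 < ln (ln (ln x)) \<and> 800 * ln (ln x) / (ln x * ln (ln (ln x))) \<le> 1
     \<and> x * ln (ln (ln x)) / ln (ln x) \<le> x \<and>
     (2 / x + (800 * ln (ln x) / (ln x * ln (ln (ln x)))) powr (ln x * ln (ln (ln x)) / (400 * ln (ln x)) - 1)) / x powr (-0.51) < \<epsilon>) at_top"
    by (intro eventually_conj a1 a2 a3 a4 a5)
  show "\<forall>\<^sub>F n in sequentially. even n \<longrightarrow> fail_prob n (M0 n) \<le> \<epsilon> * real n powr (-0.51)"
    using ev_real[OF all]
  proof (rule eventually_mono, intro impI)
    fix n :: nat
    assume h: "exp 6 \<le> real n \<and> 0 < ln (ln (ln (real n))) \<and> 800 * ln (ln (real n)) / (ln (real n) * ln (ln (ln (real n)))) \<le> 1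
     \<and> real n * ln (ln (ln (real n))) / ln (ln (real n)) \<le> real n \<and>
     (2 / real n + (800 * ln (ln (real n)) / (ln (real n) * ln (ln (ln (real n))))) powr (ln (real n) * ln (ln (ln (real n))) / (400 * ln (ln (real n))) - 1)) / real n powr (-0.51) < \<epsilon>"
      and ev: "even n"
    have nb: "n_b n \<le> real n" using h unfolding n_b_def by simp
    note h1 = h[THEN conjunct1] and h2 = h[THEN conjunct2, THEN conjunct1]
      and h3 = h[THEN conjunct2, THEN conjunct2, THEN conjunct1]
      and h5 = h[THEN conjunct2, THEN conjunct2, THEN conjunct2, THEN conjunct2]
    have fp: "fail_prob n (M0 n) \<le> 2 / real n + (800 * ln (ln (real n)) / (ln (real n) * ln (ln (ln (real n))))) powr (ln (real n) * ln (ln (ln (real n))) / (400 * ln (ln (real n))) - 1)"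
      by (rule per_n[OF ev assms[OF ev] h1 h2 h3 nb])
    have "0 < real n" using h1 exp_gt_zero[of 6] by linarith
    then have xp: "0 < real n powr (-0.51)" by simp
    have "2 / real n + (800 * ln (ln (real n)) / (ln (real n) * ln (ln (ln (real n))))) powr (ln (real n) * ln (ln (ln (real n))) / (400 * ln (ln (real n))) - 1) < \<epsilon> * real n powr (-0.51)"
      using h5 xp by (simp add: pos_divide_less_eq)
    then show "fail_prob n (M0 n) \<le> \<epsilon> * real n powr (-0.51)" using fp by linarith
  qed
qed


end
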